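(* Let $\sigma$ be a countable relational signature containing a relation symbol $R$ of arity at least $2$, and let $\mathbf P\subseteq\mathbf S_\sigma$ be a property such that for all $\mathcal M,\mathcal N\in\mathbf S_\sigma$ with $\mathrm{Aut}(\mathcal M)\cong\mathrm{Aut}(\mathcal N)$ we have $\mathcal M\in\mathbf P\iff\mathcal N\in\mathbf P$. (a) If every $\mathcal M$ such that $\mathrm{Aut}(\mathcal M)$ has a subgroup isomorphic to $S(\omega)$ satisfies $\mathcal M\notin\mathbf P$, then for every $\mathcal M'\in\mathbf S_\sigma$ (and any $Q\in\sigma\setminus\{R\}$ with $Q^{\mathcal M'}=\emptyset$), every structure of the form $\mathcal M'_Q\cup\bigcup_{i\in I}\mathcal T_i\cup\bigcup_{j\in J}\mathcal T'_j$ and every structure of the form $\bigcup_{i\in I}\mathcal T_i\cup\bigcup_{j\in J}\mathcal T'_j$, where $I$ is infinite, $\mathcal T_i\cong\mathcal T_R$, $\mathcal T'_j\cong\mathcal T'_R$ and all the listed structures have pairwise disjoint universes, does not belong to $\mathbf P$. (b) If every rigid $\mathcal M\in\mathbf S_\sigma$ belongs to $\mathbf P$, then every finite, rigid, connected $\mathcal N\in\mathbf S_\sigma$ with $N\neq\emptyset$ belongs to $\mathbf P$. (c) Suppose $\sigma$ contains a relation symbol $Q\neq R$ and $\mathcal M\in\mathbf P$ satisfies $Q^{\mathcal M}=\emptyset$. Then for every finite, rigid, connected $\mathcal N\in\mathbf S_\sigma$ with $N\neq\emptyset$, $Q^{\mathcal N}=\emptyset$ and $M\cap N=\emptyset$,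 we have $\mathcal M_Q\cup\mathcal N\in\mathbf P$.
   Context: $\mathbf S_\sigma$ is the class of all $\sigma$-structures; a property is a subclass closed under isomorphism. $\mathrm{Aut}(\mathcal M)$ is the automorphism group under composition; $\mathcal M$ is rigid if $\mathrm{Aut}(\mathcal M)$ is trivial. $S(X)$ is the symmetric group of all permutations of $X$, and $\omega$ is the set of finite cardinals. Adjacency in a $\sigma$-structure: distinct $a,b$ are adjacent if they occur together in some tuple of some relation; connectedness and degree are defined from adjacency. An $R$-graph (for $R$ of arity $r\ge2$) is a $\sigma$-structure in which all symbols other than $R$ are empty and $(a_1,\dots,a_r)\in R$ implies $a_1\ne a_2$, $a_2=\dots=a_r$ and $(a_2,a_1,\dots,a_1)\in R$; an $R$-tree is a connected $R$-graph without cycles. $\mathcal T_R$ is an infinite $R$-tree with exactly one element of degree 4 and all others of degree 5; $\mathcal T'_R$ is the infinite $R$-tree with all degrees 5. $\bigcup_i\mathcal M_i$ has universe $\bigcup_iM_i$ and each symbol interpreted as the union of interpretations. If $Q^{\mathcal M}=\emptyset$ and $Q$ has arity $q$, $\mathcal M_Q$ is $\mathcal M$ with $Q$ reinterpreted as $\{(a,\dots,a):a\in M\}$. *)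

theory Defs
  imports "HOL-Algebra.Bij" "HOL-Library.Countable"
begin

text \<open>A relational signature is a type of symbols 's with an arity function ar.
  A structure over the carrier type 'a is a pair (universe, interpretation),
  where the interpretation of a symbol s is a set of tuples (lists) of length ar s.\<close>

type_synonym ('s, 'a) struc = "'a set \<times> ('s \<Rightarrow> 'a list set)"

definition is_struc :: "('s \<Rightarrow> nat) \<Rightarrow> ('s, 'a) struc \<Rightarrow> bool" where
  "is_struc ar M \<longleftrightarrow> (\<forall>s. \<forall>t\<in>snd M s. length t = ar s \<and> set t \<subseteq> fst M)"

definition struc_iso :: "('s, 'a) struc \<Rightarrow> ('s, 'a) struc \<Rightarrow> ('a \<Rightarrow> 'a) \<Rightarrow> bool" where
  "struc_iso M N f \<longleftrightarrow> bij_betw f (fst M) (fst N) \<and>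
     (\<forall>s t. set t \<subseteq> fst M \<longrightarrow> (t \<in> snd M s \<longleftrightarrow> map f t \<in> snd N s))"

definition isomorphic :: "('s, 'a) struc \<Rightarrow> ('s, 'a) struc \<Rightarrow> bool" where
  "isomorphic M N \<longleftrightarrow> (\<exists>f. struc_iso M N f)"

definition is_property :: "('s \<Rightarrow> nat) \<Rightarrow> ('s, 'a) struc set \<Rightarrow> bool" where
  "is_property ar P \<longleftrightarrow> P \<subseteq> {M. is_struc ar M} \<and>
     (\<forall>M N. M \<in> P \<longrightarrow> is_struc ar N \<longrightarrow> isomorphic M N \<longrightarrow> N \<in> P)"

definition automorphisms :: "('s, 'a) struc \<Rightarrow> ('a \<Rightarrow> 'a) set" where
  "automorphisms M = {f. f \<in> extensional (fst M) \<and> struc_iso M M f}"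

definition AutGroup :: "('s, 'a) struc \<Rightarrow> ('a \<Rightarrow> 'a) monoid" where
  "AutGroup M = (BijGroup (fst M))\<lparr>carrier := automorphisms M\<rparr>"

definition rigid :: "('s, 'a) struc \<Rightarrow> bool" where
  "rigid M \<longleftrightarrow> automorphisms M = {(\<lambda>x\<in>fst M. x)}"

definition has_Sym_omega :: "('s, 'a) struc \<Rightarrow> bool" where
  "has_Sym_omega M \<longleftrightarrow> (\<exists>H. subgroup H (AutGroup M) \<and>
      (AutGroup M)\<lparr>carrier := H\<rparr> \<cong> BijGroup (UNIV :: nat set))"

definition adjacent :: "('s, 'a) struc \<Rightarrow> 'a \<Rightarrow> 'a \<Rightarrow> bool" where
  "adjacent M a b \<longleftrightarrow> a \<noteq> b \<and> (\<exists>s. \<exists>t\<in>snd M s. a \<in> set t \<and> b \<in> set t)"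

definition connected_struc :: "('s, 'a) struc \<Rightarrow> bool" where
  "connected_struc M \<longleftrightarrow> (\<forall>a\<in>fst M. \<forall>b\<in>fst M. (adjacent M)\<^sup>*\<^sup>* a b)"

definition has_degree :: "('s, 'a) struc \<Rightarrow> 'a \<Rightarrow> nat \<Rightarrow> bool" where
  "has_degree M a d \<longleftrightarrow> finite {b. adjacent M a b} \<and> card {b. adjacent M a b} = d"

definition has_cycle :: "('s, 'a) struc \<Rightarrow> bool" where
  "has_cycle M \<longleftrightarrow> (\<exists>xs. length xs \<ge> 3 \<and> distinct xs \<and>
      (\<forall>i. Suc i < length xs \<longrightarrow> adjacent M (xs ! i) (xs ! Suc i)) \<and>
      adjacent M (last xs) (hd xs))"

definition R_graph :: "('s \<Rightarrow> nat) \<Rightarrow> 's \<Rightarrow> ('s, 'a) struc \<Rightarrow> bool" where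
  "R_graph ar R M \<longleftrightarrow> is_struc ar M \<and> (\<forall>s. s \<noteq> R \<longrightarrow> snd M s = {}) \<and>
     (\<forall>t\<in>snd M R. \<exists>a b. a \<noteq> b \<and> t = a # replicate (ar R - 1) b \<and>
                         b # replicate (ar R - 1) a \<in> snd M R)"

definition R_tree :: "('s \<Rightarrow> nat) \<Rightarrow> 's \<Rightarrow> ('s, 'a) struc \<Rightarrow> bool" where
  "R_tree ar R M \<longleftrightarrow> R_graph ar R M \<and> connected_struc M \<and> \<not> has_cycle M"

text \<open>M is isomorphic to T_R (T_R is determined up to isomorphism by this description).\<close>
definition is_T_R :: "('s \<Rightarrow> nat) \<Rightarrow> 's \<Rightarrow> ('s, 'a) struc \<Rightarrow> bool" where
  "is_T_R ar R M \<longleftrightarrow> R_tree ar R M \<and> infinite (fst M) \<and>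
     (\<exists>a\<in>fst M. has_degree M a 4 \<and> (\<forall>b\<in>fst M. b \<noteq> a \<longrightarrow> has_degree M b 5))"

definition is_T'_R :: "('s \<Rightarrow> nat) \<Rightarrow> 's \<Rightarrow> ('s, 'a) struc \<Rightarrow> bool" where
  "is_T'_R ar R M \<longleftrightarrow> R_tree ar R M \<and> infinite (fst M) \<and> (\<forall>a\<in>fst M. has_degree M a 5)"

definition struc_Union :: "('s, 'a) struc set \<Rightarrow> ('s, 'a) struc" where
  "struc_Union F = (\<Union>M\<in>F. fst M, \<lambda>s. \<Union>M\<in>F. snd M s)"

definition struc_un :: "('s, 'a) struc \<Rightarrow> ('s, 'a) struc \<Rightarrow> ('s, 'a) struc" where
  "struc_un M N = (fst M \<union> fst N, \<lambda>s. snd M s \<union> snd N s)"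

definition with_Q :: "('s \<Rightarrow> nat) \<Rightarrow> 's \<Rightarrow> ('s, 'a) struc \<Rightarrow> ('s, 'a) struc" where
  "with_Q ar Q M = (fst M, (snd M)(Q := {replicate (ar Q) a | a. a \<in> fst M}))"

end

theory Submission
  imports Defs
begin


definition walk :: "('a \<Rightarrow> 'a \<Rightarrow> bool) \<Rightarrow> 'a list \<Rightarrow> bool" where
  "walk E xs \<longleftrightarrow> (\<forall>i. Suc i < length xs \<longrightarrow> E (xs!i) (xs!Suc i))"

definition nb :: "'a list \<Rightarrow> bool" where
  "nb xs \<longleftrightarrow> (\<forall>i. Suc (Suc i) < length xs \<longrightarrow> xs!i \<noteq> xs!Suc (Suc i))"

lemma walk_Nil[simp]: "walk E []" and walk_single[simp]: "walk E [x]"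
  by (auto simp: walk_def)

lemma walk_Cons2: "walk E (x#y#zs) \<longleftrightarrow> E x y \<and> walk E (y#zs)"
  unfolding walk_def
  apply (auto simp: less_Suc_eq_0_disj)
  done

lemma nb_Nil[simp]: "nb []" and nb_single[simp]: "nb [x]" and nb_two[simp]: "nb [x,y]"
  by (auto simp: nb_def)

lemma nb_Cons3: "nb (x#y#z#zs) \<longleftrightarrow> x \<noteq> z \<and> nb (y#z#zs)"
  unfolding nb_def
  apply (auto simp: less_Suc_eq_0_disj)
  done

lemma cycle_extract:
  assumes irr: "\<And>a. \<not> E a a" and w: "walk E xs" and n: "nb xs" and nd: "\<not> distinct xs"
  shows "\<exists>ys. 3 \<le> length ys \<and> distinct ys \<and> walk E ys \<and> E (last ys) (hd ys)"
proof -
  define Pd where "Pd d \<longleftrightarrow> 0 < d \<and> (\<exists>i. i + d < length xs \<and> xs!i = xs!(i+d))" for d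
  from nd obtain i j where ij: "i < j" "j < length xs" "xs!i = xs!j"
    by (metis distinct_conv_nth linorder_neqE_nat)
  have "Pd (j - i)" unfolding Pd_def using ij by (intro conjI exI[of _ i]) auto
  define d where "d = (LEAST d. Pd d)"
  have Pdd: "Pd d" unfolding d_def by (rule LeastI) fact
  have mind: "\<And>d'. d' < d \<Longrightarrow> \<not> Pd d'" unfolding d_def using not_less_Least by blast
  from Pdd obtain i where i: "0 < d" "i + d < length xs" "xs!i = xs!(i+d)" unfolding Pd_def by blast
  define ys where "ys = take d (drop i xs)"
  have ly: "length ys = d" using i by (simp add: ys_def)
  have ysn: "\<And>k. k < d \<Longrightarrow> ys!k = xs!(i+k)" using i by (simp add: ys_def)
  have d1: "d \<noteq> 1"
  proof
    assume "d = 1"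
    with i w have "E (xs!i) (xs!(i+1))" unfolding walk_def by auto
    with i \<open>d = 1\<close> irr show False by metis
  qed
  have d2: "d \<noteq> 2"
  proof
    assume "d = 2"
    with i n have "xs!i \<noteq> xs!(Suc (Suc i))" unfolding nb_def by auto
    with i \<open>d = 2\<close> show False by (simp add: numeral_2_eq_2)
  qed
  have "3 \<le> length ys" using ly d1 d2 i(1) by linarith
  moreover have "distinct ys"
    unfolding distinct_conv_nth
  proof (intro allI impI)
    fix p q assume pq: "p < length ys" "q < length ys" "p \<noteq> q"
    show "ys!p \<noteq> ys!q"
    proof
      assume eq: "ys!p = ys!q"
      { fix a b assume ab: "a < b" "b < d" "ys!a = ys!b"
        then have "Pd (b - a)" unfolding Pd_def using i ysn
          by (intro conjI exI[of _ "i+a"]) auto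
        with mind ab have False by (meson diff_le_self le_less_trans less_imp_diff_less) }
      then show False using pq eq ly by (metis linorder_neqE_nat)
    qed
  qed
  moreover have "walk E ys" unfolding walk_def
  proof (intro allI impI)
    fix k assume "Suc k < length ys"
    then show "E (ys!k) (ys!Suc k)" using ysn ly w i unfolding walk_def
      by (metis add_Suc_right less_trans_Suc less_imp_le_nat Suc_lessD le_less_trans add_less_cancel_left nat_add_left_cancel_less)
  qed
  moreover have "E (last ys) (hd ys)"
  proof -
    have "last ys = ys!(d - 1)" using ly i by (metis last_conv_nth length_0_conv less_not_refl)
    also have "\<dots> = xs!(i + (d - 1))" using ysn i by simp
    finally have "last ys = xs!(i + (d - 1))" .
    moreover have "hd ys = xs!(i+d)" using ly ysn[of 0] i by (metis add_0_right hd_conv_nth length_0_conv less_not_refl)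
    moreover have "E (xs!(i + (d - 1))) (xs!Suc (i + (d - 1)))"
    proof -
      have "Suc (i + (d - 1)) < length xs" using i by linarith
      then show ?thesis using w unfolding walk_def by blast
    qed
    ultimately show ?thesis using i by simp
  qed
  ultimately show ?thesis by blast
qed

lemma walk_join: "walk E xs \<Longrightarrow> walk E ys \<Longrightarrow> xs \<noteq> [] \<Longrightarrow> ys \<noteq> [] \<Longrightarrow> E (last xs) (hd ys)
  \<Longrightarrow> walk E (xs @ ys)"
  unfolding walk_def
proof (intro allI impI)
  fix i assume w1: "\<forall>i. Suc i < length xs \<longrightarrow> E (xs ! i) (xs ! Suc i)"
    and w2: "\<forall>i. Suc i < length ys \<longrightarrow> E (ys ! i) (ys ! Suc i)"
    and ne: "xs \<noteq> []" "ys \<noteq> []" and j: "E (last xs) (hd ys)"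
    and i: "Suc i < length (xs @ ys)"
  consider "Suc i < length xs" | "Suc i = length xs" | "length xs \<le> i" by linarith
  then show "E ((xs @ ys) ! i) ((xs @ ys) ! Suc i)"
  proof cases
    case 1 then show ?thesis using w1 by (simp add: nth_append)
  next
    case 2 then have "i = length xs - 1" by simp
    then show ?thesis using j ne 2 by (simp add: nth_append last_conv_nth hd_conv_nth)
  next
    case 3
    then have "Suc (i - length xs) < length ys" using i by simp
    then show ?thesis using w2 3 by (simp add: nth_append Suc_diff_le)
  qed
qed

lemma nb_join: "nb xs \<Longrightarrow> nb ys \<Longrightarrow> xs \<noteq> [] \<Longrightarrow> ys \<noteq> [] \<Longrightarrow>
   (2 \<le> length xs \<longrightarrow> xs!(length xs - 2) \<noteq> hd ys) \<Longrightarrow>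
   (2 \<le> length ys \<longrightarrow> last xs \<noteq> ys!1) \<Longrightarrow> nb (xs @ ys)"
  unfolding nb_def
proof (intro allI impI)
  fix i assume w1: "\<forall>i. Suc (Suc i) < length xs \<longrightarrow> xs ! i \<noteq> xs ! Suc (Suc i)"
    and w2: "\<forall>i. Suc (Suc i) < length ys \<longrightarrow> ys ! i \<noteq> ys ! Suc (Suc i)"
    and ne: "xs \<noteq> []" "ys \<noteq> []" and j1: "(2 \<le> length xs \<longrightarrow> xs!(length xs - 2) \<noteq> hd ys)"
    and j2: "(2 \<le> length ys \<longrightarrow> last xs \<noteq> ys!1)"
    and i: "Suc (Suc i) < length (xs @ ys)"
  consider "Suc (Suc i) < length xs" | "Suc (Suc i) = length xs" | "Suc i = length xs" | "length xs \<le> i" by linarith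
  then show "(xs @ ys) ! i \<noteq> (xs @ ys) ! Suc (Suc i)"
  proof cases
    case 1 then show ?thesis using w1 by (simp add: nth_append)
  next
    case 2 then have "i = length xs - 2" by simp
    then show ?thesis using j1 ne 2 by (simp add: nth_append hd_conv_nth)
  next
    case 3
    then have "2 \<le> length ys" using i by simp
    moreover have "i = length xs - 1" using 3 by simp
    ultimately show ?thesis using j2 ne 3 by (simp add: nth_append last_conv_nth)
  next
    case 4
    then have "Suc (Suc (i - length xs)) < length ys" using i by simp
    then show ?thesis using w2 4 by (simp add: nth_append Suc_diff_le)
  qed
qed

lemma walk_rev: "(\<And>a b. E a b \<Longrightarrow> E b a) \<Longrightarrow> walk E xs \<Longrightarrow> walk E (rev xs)"
  unfolding walk_def
proof (intro allI impI)
  fix i assume s: "\<And>a b. E a b \<Longrightarrow> E b a" and w: "\<forall>i. Suc i < length xs \<longrightarrow> E (xs ! i) (xs ! Suc i)"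
    and i: "Suc i < length (rev xs)"
  define j where "j = length xs - Suc (Suc i)"
  have j: "Suc j < length xs" "length xs - Suc i = Suc j" using i by (auto simp: j_def)
  have "E (xs!j) (xs!Suc j)" using w j by blast
  then show "E (rev xs ! i) (rev xs ! Suc i)" using i j s
    by (simp add: rev_nth j_def)
qed

lemma nb_rev: "nb xs \<Longrightarrow> nb (rev xs)"
  unfolding nb_def
proof (intro allI impI)
  fix i assume w: "\<forall>i. Suc (Suc i) < length xs \<longrightarrow> xs ! i \<noteq> xs ! Suc (Suc i)"
    and i: "Suc (Suc i) < length (rev xs)"
  define j where "j = length xs - Suc (Suc (Suc i))"
  have j: "Suc (Suc j) < length xs" "length xs - Suc i = Suc (Suc j)" using i by (auto simp: j_def)
  have "xs!j \<noteq> xs!Suc (Suc j)" using w j by blast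
  then show "rev xs ! i \<noteq> rev xs ! Suc (Suc i)" using i j
    by (simp add: rev_nth j_def)
qed

lemma walk_tl: "walk E xs \<Longrightarrow> walk E (tl xs)"
  by (cases xs) (auto simp: walk_def)

lemma nb_tl: "nb xs \<Longrightarrow> nb (tl xs)"
  by (cases xs) (auto simp: nb_def)

lemma hd_last_not_distinct: "2 \<le> length zs \<Longrightarrow> hd zs = last zs \<Longrightarrow> \<not> distinct zs"
proof
  assume l: "2 \<le> length zs" and h: "hd zs = last zs" and d: "distinct zs"
  have ne: "zs \<noteq> []" using l by auto
  have "zs ! 0 = zs ! (length zs - 1)" using ne h by (simp add: hd_conv_nth last_conv_nth)
  moreover have "0 \<noteq> length zs - 1" using l by simp
  moreover have "length zs - 1 < length zs" "0 < length zs" using l by auto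
  ultimately show False using nth_eq_iff_index_eq[OF d, of 0 "length zs - 1"] by simp
qed

lemma nb_walk_unique:
  assumes sym: "\<And>a b. E a b \<Longrightarrow> E b a"
    and acyc: "\<And>xs. walk E xs \<Longrightarrow> nb xs \<Longrightarrow> distinct xs"
  shows "walk E p \<Longrightarrow> nb p \<Longrightarrow> walk E q \<Longrightarrow> nb q \<Longrightarrow> p \<noteq> [] \<Longrightarrow> q \<noteq> [] \<Longrightarrow>
     hd p = hd q \<Longrightarrow> last p = last q \<Longrightarrow> p = q"
proof (induction "length p + length q" arbitrary: p q rule: less_induct)
  case less
  obtain a p' where p: "p = a # p'" using less.prems by (cases p) auto
  obtain q' where q: "q = a # q'" using less.prems p by (cases q) auto
  show ?case
  proof (cases "p' = [] \<or> q' = []")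
    case True
    then show ?thesis
    proof
      assume "p' = []"
      show ?thesis
      proof (rule ccontr)
        assume "p \<noteq> q"
        then have "2 \<le> length q" using q \<open>p' = []\<close> p by (cases q') auto
        moreover have "hd q = last q" using less.prems p q \<open>p' = []\<close> by simp
        ultimately show False using hd_last_not_distinct acyc less.prems by blast
      qed
    next
      assume "q' = []"
      show ?thesis
      proof (rule ccontr)
        assume "p \<noteq> q"
        then have "2 \<le> length p" using q \<open>q' = []\<close> p by (cases p') auto
        moreover have "hd p = last p" using less.prems p q \<open>q' = []\<close> by simp
        ultimately show False using hd_last_not_distinct acyc less.prems by blast
      qed
    qed
  next
    case False
    then have ne: "p' \<noteq> []" "q' \<noteq> []" by auto
    show ?thesis
    proof (cases "hd p' = hd q'")
      case True
      have "p' = q'"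
        apply (rule less.hyps[of p' q'])
        using less.prems p q ne True by (auto dest: walk_tl nb_tl)
      then show ?thesis using p q by simp
    next
      case False
      define zs where "zs = rev p' @ q"
      have wp: "walk E p'" using walk_tl less.prems p by fastforce
      have np: "nb p'" using nb_tl less.prems p by fastforce
      have e1: "E (hd p') a" using less.prems(1) p ne sym by (cases p') (auto simp: walk_Cons2)
      have "walk E zs" unfolding zs_def
        by (rule walk_join) (use walk_rev[OF sym wp] less.prems ne e1 q in \<open>auto simp: last_rev\<close>)
      moreover have "nb zs" unfolding zs_def
      proof (rule nb_join)
        show "nb (rev p')" using nb_rev np .
        show "2 \<le> length (rev p') \<longrightarrow> rev p' ! (length (rev p') - 2) \<noteq> hd q"
        proof
          assume l: "2 \<le> length (rev p')"
          then obtain b c r where "p' = b # c # r" by (cases p'; cases "tl p'") auto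
          moreover have "rev p' ! (length (rev p') - 2) = p' ! 1" using l by (simp add: rev_nth)
          ultimately show "rev p' ! (length (rev p') - 2) \<noteq> hd q"
            using less.prems(2) p q by (auto simp: nb_Cons3)
        qed
        show "2 \<le> length q \<longrightarrow> last (rev p') \<noteq> q ! 1"
          using False ne q by (cases q') (auto simp: last_rev)
      qed (use ne q less.prems in auto)
      moreover have "2 \<le> length zs" using ne q zs_def by (cases p') auto
      moreover have "hd zs = last zs" using ne q p less.prems zs_def by (simp add: hd_rev)
      ultimately show ?thesis using hd_last_not_distinct acyc by blast
    qed
  qed
qed



definition chl :: "('a \<Rightarrow> 'a \<Rightarrow> bool) \<Rightarrow> 'a \<Rightarrow> 'a list \<Rightarrow> 'a set" where
  "chl E v prev = {w. E v w} - set prev"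

definition ench :: "'a set \<Rightarrow> nat \<Rightarrow> 'a" where
  "ench S = (SOME g. bij_betw g {..<4::nat} S)"

fun stp :: "('a \<Rightarrow> 'a \<Rightarrow> bool) \<Rightarrow> 'a list \<Rightarrow> nat \<Rightarrow> 'a list" where
  "stp E [] k = []"
| "stp E (v#rest) k = ench (chl E v (take 1 rest)) k # v # rest"

definition nav :: "('a \<Rightarrow> 'a \<Rightarrow> bool) \<Rightarrow> 'a \<Rightarrow> nat list \<Rightarrow> 'a list" where
  "nav E r ks = foldl (stp E) [r] ks"

lemma nav_Nil[simp]: "nav E r [] = [r]" by (simp add: nav_def)
lemma nav_snoc: "nav E r (ks@[k]) = stp E (nav E r ks) k" by (simp add: nav_def)

lemma ench_bij: assumes "finite S" "card S = 4" shows "bij_betw (ench S) {..<4} S"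
proof -
  from assms obtain h where "bij_betw h {0..<card S} S" using ex_bij_betw_nat_finite by blast
  then have "\<exists>g. bij_betw g {..<4::nat} S" using \<open>card S = 4\<close> by (auto simp: lessThan_atLeast0)
  then show ?thesis unfolding ench_def by (rule someI_ex)
qed

locale tree4 =
  fixes V :: "'a set" and E :: "'a \<Rightarrow> 'a \<Rightarrow> bool" and r :: 'a
  assumes sym: "\<And>a b. E a b \<Longrightarrow> E b a" and irr: "\<And>a. \<not> E a a"
    and inV: "\<And>a b. E a b \<Longrightarrow> a \<in> V"
    and rV: "r \<in> V" and conn: "\<And>v. v \<in> V \<Longrightarrow> E\<^sup>*\<^sup>* r v"
    and acyc: "\<And>xs. walk E xs \<Longrightarrow> nb xs \<Longrightarrow> distinct xs"
    and degr: "finite {b. E r b}" "card {b. E r b} = 4"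
    and degv: "\<And>v. v \<in> V \<Longrightarrow> v \<noteq> r \<Longrightarrow> finite {b. E v b} \<and> card {b. E v b} = 5"
begin

definition valid :: "nat list \<Rightarrow> bool" where "valid ks \<longleftrightarrow> set ks \<subseteq> {..<4}"

definition good :: "'a list \<Rightarrow> bool" where
  "good ns \<longleftrightarrow> ns \<noteq> [] \<and> walk E ns \<and> nb ns \<and> last ns = r \<and> hd ns \<in> V"

lemma good_card:
  assumes g: "good (v # rest)"
  shows "finite (chl E v (take 1 rest)) \<and> card (chl E v (take 1 rest)) = 4"
proof (cases rest)
  case Nil
  then have "v = r" using g by (simp add: good_def)
  then show ?thesis using Nil degr by (simp add: chl_def)
next
  case (Cons u rest')
  have vr: "v \<noteq> r"
  proof
    assume "v = r"
    have "v # rest = [r]"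
      by (rule nb_walk_unique[OF sym acyc]) (use g \<open>v = r\<close> in \<open>auto simp: good_def\<close>)
    then show False using Cons by simp
  qed
  have vV: "v \<in> V" using g by (simp add: good_def)
  have e: "E v u" using g Cons by (simp add: good_def walk_Cons2)
  have "chl E v (take 1 rest) = {b. E v b} - {u}" using Cons by (simp add: chl_def)
  then show ?thesis using degv[OF vV vr] e by simp
qed

lemma good_step:
  assumes g: "good ns" and k: "k < 4"
  shows "good (stp E ns k)"
proof -
  obtain v rest where ns: "ns = v # rest" using g by (cases ns) (auto simp: good_def)
  let ?S = "chl E v (take 1 rest)"
  have b: "bij_betw (ench ?S) {..<4} ?S" using good_card g ns ench_bij by blast
  have w: "ench ?S k \<in> ?S" using b k by (auto simp: bij_betw_def)
  then have e: "E v (ench ?S k)" and n: "ench ?S k \<notin> set (take 1 rest)" by (auto simp: chl_def)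
  have "walk E (ench ?S k # v # rest)" using g ns e sym by (simp add: good_def walk_Cons2)
  moreover have "nb (ench ?S k # v # rest)" using g ns n by (cases rest) (auto simp: good_def nb_Cons3)
  moreover have "ench ?S k \<in> V" using inV sym e by blast
  ultimately show ?thesis using g ns by (simp add: good_def)
qed

lemma good_nav: "valid ks \<Longrightarrow> good (nav E r ks)"
proof (induction ks rule: rev_induct)
  case Nil then show ?case using rV by (simp add: good_def)
next
  case (snoc k ks)
  then show ?case using good_step by (simp add: valid_def nav_snoc)
qed

lemma length_nav: "length (nav E r ks) = Suc (length ks)"
proof (induction ks rule: rev_induct)
  case (snoc k ks)
  have "nav E r ks \<noteq> []" using snoc by auto
  then show ?case using snoc by (cases "nav E r ks") (auto simp: nav_snoc)
qed simp

lemma nav_snoc_eq: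
  assumes "valid ks"
  obtains v rest where "nav E r ks = v # rest"
    "nav E r (ks @ [k]) = ench (chl E v (take 1 rest)) k # nav E r ks"
    "finite (chl E v (take 1 rest))" "card (chl E v (take 1 rest)) = 4"
proof -
  have "nav E r ks \<noteq> []" using length_nav[of ks] by auto
  then obtain v rest where ns: "nav E r ks = v # rest" by (cases "nav E r ks") auto
  then show ?thesis using that good_card good_nav[OF assms] by (simp add: nav_snoc)
qed

lemma nav_inj: "valid ks \<Longrightarrow> valid ks' \<Longrightarrow> nav E r ks = nav E r ks' \<Longrightarrow> ks = ks'"
proof (induction ks arbitrary: ks' rule: rev_induct)
  case Nil
  then have "length [r] = Suc (length ks')" using length_nav[of ks'] by simp
  then show ?case by simp
next
  case (snoc k ks)
  obtain ks'' k' where ks': "ks' = ks'' @ [k']"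
    using snoc.prems length_nav[of ks'] length_nav[of "ks@[k]"] by (cases ks' rule: rev_exhaust) auto
  have v1: "valid ks" "k < 4" "valid ks''" "k' < 4" using snoc.prems ks' by (auto simp: valid_def)
  obtain v rest where a: "nav E r ks = v # rest"
    "nav E r (ks @ [k]) = ench (chl E v (take 1 rest)) k # nav E r ks"
    "finite (chl E v (take 1 rest))" "card (chl E v (take 1 rest)) = 4"
    using nav_snoc_eq[OF v1(1)] by metis
  obtain v' rest' where b: "nav E r ks'' = v' # rest'"
    "nav E r (ks'' @ [k']) = ench (chl E v' (take 1 rest')) k' # nav E r ks''"
    using nav_snoc_eq[OF v1(3)] by metis
  have eq: "nav E r ks = nav E r ks''" using snoc.prems a b ks' by simp
  then have "ks = ks''" using snoc.IH v1 by blast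
  moreover have "k = k'"
  proof -
    have "ench (chl E v (take 1 rest)) k = ench (chl E v (take 1 rest)) k'"
      using snoc.prems a b ks' eq by auto
    moreover have "inj_on (ench (chl E v (take 1 rest))) {..<4}"
      using ench_bij[OF a(3,4)] by (simp add: bij_betw_def)
    ultimately show ?thesis using v1 by (simp add: inj_on_def)
  qed
  ultimately show ?case using ks' by simp
qed

definition phi :: "nat list \<Rightarrow> 'a" where "phi ks = hd (nav E r ks)"

lemma phi_inj: "valid ks \<Longrightarrow> valid ks' \<Longrightarrow> phi ks = phi ks' \<Longrightarrow> ks = ks'"
proof -
  assume a: "valid ks" "valid ks'" "phi ks = phi ks'"
  have "nav E r ks = nav E r ks'"
    by (rule nb_walk_unique[OF sym acyc]) (use good_nav[OF a(1)] good_nav[OF a(2)] a(3) in \<open>auto simp: good_def phi_def\<close>)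
  then show ?thesis using nav_inj a by blast
qed

lemma phi_V: "valid ks \<Longrightarrow> phi ks \<in> V"
  using good_nav by (simp add: good_def phi_def)

lemma nbr_cases:
  assumes vk: "valid ks" and e: "E (phi ks) w"
  shows "(\<exists>xs k. ks = xs @ [k] \<and> w = phi xs) \<or> (\<exists>k<4. w = phi (ks @ [k]))"
proof -
  have "nav E r ks \<noteq> []" using length_nav[of ks] by auto
  then obtain v rest where ns: "nav E r ks = v # rest" by (cases "nav E r ks") auto
  show ?thesis
  proof (cases "w \<in> set (take 1 rest)")
    case True
    then obtain rest' where rest: "rest = w # rest'" by (cases rest) auto
    then have "ks \<noteq> []" using ns length_nav[of ks] by auto
    then obtain xs k where ks: "ks = xs @ [k]" by (cases ks rule: rev_exhaust) auto
    have "valid xs" using vk ks by (simp add: valid_def)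
    then obtain v' rest'' where "nav E r xs = v' # rest''"
      "nav E r (xs @ [k]) = ench (chl E v' (take 1 rest'')) k # nav E r xs"
      using nav_snoc_eq by metis
    then have "phi xs = w" using ns ks rest by (simp add: phi_def)
    then show ?thesis using ks by blast
  next
    case False
    let ?S = "chl E v (take 1 rest)"
    have vp: "v = phi ks" using ns by (simp add: phi_def)
    have "w \<in> ?S" using False e vp by (simp add: chl_def)
    moreover have fc: "finite ?S \<and> card ?S = 4" using good_card[of v rest] good_nav[OF vk] ns by simp
    moreover have "phi (ks @ [k]) = ench ?S k" for k using ns by (simp add: phi_def nav_snoc)
    ultimately have b: "bij_betw (ench ?S) {..<4} ?S" "\<And>k. phi (ks @ [k]) = ench ?S k"
      using ench_bij by auto
    from \<open>w \<in> ?S\<close> b(1) obtain k where "k < 4" "w = ench ?S k"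
    proof -
      have "w \<in> ench ?S ` {..<4}" using \<open>w \<in> ?S\<close> b(1) by (simp add: bij_betw_def)
      then show ?thesis using that by auto
    qed
    then show ?thesis using b(2) by auto
  qed
qed

lemma valid_snoc: "valid (ks @ [k]) \<longleftrightarrow> valid ks \<and> k < 4"
  by (auto simp: valid_def)

lemma phi_surj: "v \<in> V \<Longrightarrow> \<exists>ks. valid ks \<and> phi ks = v"
proof -
  assume "v \<in> V"
  then have "E\<^sup>*\<^sup>* r v" by (rule conn)
  then show ?thesis
  proof (induction rule: rtranclp_induct)
    case base then show ?case by (intro exI[of _ "[]"]) (simp add: valid_def phi_def)
  next
    case (step u w)
    then obtain ks where ks: "valid ks" "phi ks = u" by blast
    then have "E (phi ks) w" using step by simp
    from nbr_cases[OF ks(1) this] show ?case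
      using ks(1) valid_snoc by blast
  qed
qed

lemma phi_bij: "bij_betw phi {ks. valid ks} V"
  unfolding bij_betw_def inj_on_def using phi_inj phi_V phi_surj by blast

lemma phi_adj:
  assumes "valid a" "valid b"
  shows "E (phi a) (phi b) \<longleftrightarrow> (\<exists>k. b = a @ [k]) \<or> (\<exists>k. a = b @ [k])"
proof
  assume "E (phi a) (phi b)"
  from nbr_cases[OF assms(1) this] show "(\<exists>k. b = a @ [k]) \<or> (\<exists>k. a = b @ [k])"
  proof
    assume "\<exists>xs k. a = xs @ [k] \<and> phi b = phi xs"
    then obtain xs k where "a = xs @ [k]" "phi b = phi xs" by blast
    moreover have "valid xs" using assms \<open>a = xs @ [k]\<close> by (simp add: valid_snoc)
    ultimately have "b = xs" using phi_inj[OF assms(2)] by blast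
    then show ?thesis using \<open>a = xs @ [k]\<close> by blast
  next
    assume "\<exists>k<4. phi b = phi (a @ [k])"
    then obtain k where "k < 4" "phi b = phi (a @ [k])" by blast
    moreover have "valid (a @ [k])" using assms(1) \<open>k < 4\<close> by (simp add: valid_snoc)
    ultimately have "b = a @ [k]" using phi_inj[OF assms(2)] by blast
    then show ?thesis by blast
  qed
next
  have edge: "E (phi (xs @ [k])) (phi xs)" if "valid (xs @ [k])" for xs k
  proof -
    have v: "valid xs" "k < 4" using that by (auto simp: valid_snoc)
    obtain v rest where c: "nav E r xs = v # rest"
      "nav E r (xs @ [k]) = ench (chl E v (take 1 rest)) k # nav E r xs"
      using nav_snoc_eq[OF v(1)] by metis
    have "walk E (nav E r (xs @ [k]))" using good_nav[OF that] by (simp add: good_def)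
    then show ?thesis using c by (simp add: phi_def walk_Cons2)
  qed
  assume "(\<exists>k. b = a @ [k]) \<or> (\<exists>k. a = b @ [k])"
  then show "E (phi a) (phi b)"
  proof
    assume "\<exists>k. b = a @ [k]"
    then obtain k where "b = a @ [k]" by blast
    then show ?thesis using edge[of a k] assms sym by simp
  next
    assume "\<exists>k. a = b @ [k]"
    then obtain k where "a = b @ [k]" by blast
    then show ?thesis using edge[of b k] assms by simp
  qed
qed

end

lemma tree4_iso:
  assumes A: "tree4 V1 E1 r1" and B: "tree4 V2 E2 r2"
  shows "\<exists>f. bij_betw f V1 V2 \<and> (\<forall>a\<in>V1. \<forall>b\<in>V1. E1 a b \<longleftrightarrow> E2 (f a) (f b))"
proof -
  interpret A: tree4 V1 E1 r1 by fact
  interpret B: tree4 V2 E2 r2 by fact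
  have vv: "A.valid = B.valid" by (simp add: A.valid_def B.valid_def fun_eq_iff)
  define f where "f = B.phi \<circ> inv_into {ks. A.valid ks} A.phi"
  have bi: "bij_betw (inv_into {ks. A.valid ks} A.phi) V1 {ks. A.valid ks}"
    using A.phi_bij by (rule bij_betw_inv_into)
  have "bij_betw f V1 V2" unfolding f_def using bij_betw_trans[OF bi] B.phi_bij vv by simp
  moreover have "E1 a b \<longleftrightarrow> E2 (f a) (f b)" if "a \<in> V1" "b \<in> V1" for a b
  proof -
    let ?a = "inv_into {ks. A.valid ks} A.phi a" and ?b = "inv_into {ks. A.valid ks} A.phi b"
    have va: "A.valid ?a" "A.valid ?b" using bi that by (auto simp: bij_betw_def)
    have "a = A.phi ?a" "b = A.phi ?b" using A.phi_bij that by (auto simp: bij_betw_inv_into_right)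
    then have "E1 a b \<longleftrightarrow> E1 (A.phi ?a) (A.phi ?b)" by simp
    also have "\<dots> \<longleftrightarrow> E2 (B.phi ?a) (B.phi ?b)" using A.phi_adj B.phi_adj va vv by simp
    finally show ?thesis by (simp add: f_def)
  qed
  ultimately show ?thesis by blast
qed



lemma adjacent_sym: "adjacent M a b \<Longrightarrow> adjacent M b a"
  by (auto simp: adjacent_def)

lemma adjacent_in: "is_struc ar M \<Longrightarrow> adjacent M a b \<Longrightarrow> a \<in> fst M \<and> b \<in> fst M"
  by (auto simp: adjacent_def is_struc_def)

lemma R_graph_char:
  assumes g: "R_graph ar R A" and ar: "2 \<le> ar R"
  shows "t \<in> snd A s \<longleftrightarrow> s = R \<and> (\<exists>a b. adjacent A a b \<and> t = a # replicate (ar R - 1) b)"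
proof
  assume t: "t \<in> snd A s"
  then have sR: "s = R" using g by (auto simp: R_graph_def)
  then obtain a b where ab: "a \<noteq> b" "t = a # replicate (ar R - 1) b" using g t by (auto simp: R_graph_def)
  have "b \<in> set t" using ab ar by simp
  moreover have "a \<in> set t" using ab by simp
  ultimately have "adjacent A a b" using ab t unfolding adjacent_def by blast
  then show "s = R \<and> (\<exists>a b. adjacent A a b \<and> t = a # replicate (ar R - 1) b)" using sR ab by blast
next
  assume "s = R \<and> (\<exists>a b. adjacent A a b \<and> t = a # replicate (ar R - 1) b)"
  then obtain a b where sR: "s = R" and adj: "adjacent A a b" and t: "t = a # replicate (ar R - 1) b" by blast
  from adj obtain s' u where u: "u \<in> snd A s'" "a \<in> set u" "b \<in> set u" "a \<noteq> b" unfolding adjacent_def by blast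
  then have "s' = R" using g by (auto simp: R_graph_def)
  then obtain c d where cd: "c \<noteq> d" "u = c # replicate (ar R - 1) d" "d # replicate (ar R - 1) c \<in> snd A R"
    using g u by (auto simp: R_graph_def)
  have "set u = {c, d}" using cd ar by simp
  then have "(a = c \<and> b = d) \<or> (a = d \<and> b = c)" using u by auto
  then show "t \<in> snd A s" using cd u \<open>s' = R\<close> t sR by auto
qed

lemma R_graph_iso:
  assumes gA: "R_graph ar R A" and gB: "R_graph ar R B" and ar: "2 \<le> ar R"
    and f: "bij_betw f (fst A) (fst B)"
    and adj: "\<And>a b. a \<in> fst A \<Longrightarrow> b \<in> fst A \<Longrightarrow> adjacent A a b \<longleftrightarrow> adjacent B (f a) (f b)"
  shows "struc_iso A B f"
  unfolding struc_iso_def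
proof (intro conjI f allI impI)
  fix s t assume st: "set t \<subseteq> fst A"
  have sA: "is_struc ar A" using gA by (simp add: R_graph_def)
  have sB: "is_struc ar B" using gB by (simp add: R_graph_def)
  show "t \<in> snd A s \<longleftrightarrow> map f t \<in> snd B s"
  proof
    assume "t \<in> snd A s"
    then obtain a b where "s = R" "adjacent A a b" "t = a # replicate (ar R - 1) b"
      using R_graph_char[OF gA ar] by blast
    moreover have "a \<in> fst A" "b \<in> fst A" using adjacent_in[OF sA \<open>adjacent A a b\<close>] by auto
    ultimately show "map f t \<in> snd B s" using adj R_graph_char[OF gB ar] by auto
  next
    assume "map f t \<in> snd B s"
    then obtain c d where cd: "s = R" "adjacent B c d" "map f t = c # replicate (ar R - 1) d"
      using R_graph_char[OF gB ar] by blast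
    then obtain a t' where t: "t = a # t'" by (cases t) auto
    have fa: "f a = c" and ft': "map f t' = replicate (ar R - 1) d" using cd t by auto
    have lt': "length t' = ar R - 1" using ft' by (metis length_map length_replicate)
    then have "t' \<noteq> []" using ar by auto
    define b where "b = hd t'"
    have inj: "inj_on f (fst A)" using f by (simp add: bij_betw_def)
    have "\<forall>x\<in>set t'. x = b"
    proof
      fix x assume x: "x \<in> set t'"
      have "f x = d" using ft' x by (metis imageI in_set_replicate set_map)
      moreover have "f b = d" using ft' \<open>t' \<noteq> []\<close> b_def by (metis hd_in_set imageI in_set_replicate set_map)
      moreover have "x \<in> fst A" "b \<in> fst A" using st t x \<open>t' \<noteq> []\<close> b_def by auto
      ultimately show "x = b" using inj by (metis inj_onD)
    qed
    then have t'b: "t' = replicate (ar R - 1) b" using lt' by (metis replicate_length_same)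
    have fb: "f b = d" using ft' t'b ar by (cases "ar R - 1") auto
    have "a \<in> fst A" "b \<in> fst A" using st t \<open>t' \<noteq> []\<close> b_def by auto
    then have "adjacent A a b" using adj cd fa fb by simp
    then show "t \<in> snd A s" using R_graph_char[OF gA ar] cd t t'b by auto
  qed
qed

lemma T_R_tree4:
  assumes T: "is_T_R ar R A"
  shows "\<exists>r. tree4 (fst A) (adjacent A) r"
proof -
  have g: "R_graph ar R A" and c: "connected_struc A" and nc: "\<not> has_cycle A"
    using T by (auto simp: is_T_R_def R_tree_def)
  have sA: "is_struc ar A" using g by (simp add: R_graph_def)
  obtain r where r: "r \<in> fst A" "has_degree A r 4" "\<forall>b\<in>fst A. b \<noteq> r \<longrightarrow> has_degree A b 5"
    using T by (auto simp: is_T_R_def)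
  have "tree4 (fst A) (adjacent A) r"
  proof
    show "\<And>a b. adjacent A a b \<Longrightarrow> adjacent A b a" by (rule adjacent_sym)
    show "\<And>a. \<not> adjacent A a a" by (simp add: adjacent_def)
    show "\<And>a b. adjacent A a b \<Longrightarrow> a \<in> fst A" using adjacent_in[OF sA] by blast
    show "r \<in> fst A" by fact
    show "\<And>v. v \<in> fst A \<Longrightarrow> (adjacent A)\<^sup>*\<^sup>* r v" using c r by (simp add: connected_struc_def)
    show "distinct xs" if "walk (adjacent A) xs" "nb xs" for xs
    proof (rule ccontr)
      assume "\<not> distinct xs"
      from cycle_extract[of "adjacent A", OF _ that this] have "has_cycle A"
        unfolding has_cycle_def walk_def by (auto simp: adjacent_def)
      with nc show False by simp
    qed
    show "finite {b. adjacent A r b}" "card {b. adjacent A r b} = 4" using r by (auto simp: has_degree_def)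
    show "\<And>v. v \<in> fst A \<Longrightarrow> v \<noteq> r \<Longrightarrow> finite {b. adjacent A v b} \<and> card {b. adjacent A v b} = 5"
      using r by (auto simp: has_degree_def)
  qed
  then show ?thesis by blast
qed

lemma T_R_iso:
  assumes A: "is_T_R ar R A" and B: "is_T_R ar R B" and ar: "2 \<le> ar R"
  shows "\<exists>f. struc_iso A B f"
proof -
  obtain r1 r2 where t1: "tree4 (fst A) (adjacent A) r1" and t2: "tree4 (fst B) (adjacent B) r2"
    using T_R_tree4 A B by metis
  obtain f where f: "bij_betw f (fst A) (fst B)" "\<forall>a\<in>fst A. \<forall>b\<in>fst A. adjacent A a b \<longleftrightarrow> adjacent B (f a) (f b)"
    using tree4_iso[OF t1 t2] by blast
  have "struc_iso A B f"
    by (rule R_graph_iso[where ar=ar and R=R, OF _ _ ar f(1)]) (use A B f(2) in \<open>auto simp: is_T_R_def R_tree_def\<close>)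
  then show ?thesis by blast
qed



lemma map_idem_on: "set t \<subseteq> A \<Longrightarrow> (\<And>x. x \<in> A \<Longrightarrow> g (f x) = x) \<Longrightarrow> map g (map f t) = t"
  by (induction t) auto

lemma auto_intro:
  assumes X: "is_struc ar X" and ext: "f \<in> extensional (fst X)" and b: "bij_betw f (fst X) (fst X)"
    and gf: "\<And>x. x \<in> fst X \<Longrightarrow> g (f x) = x"
    and pf: "\<And>s t. t \<in> snd X s \<Longrightarrow> map f t \<in> snd X s"
    and pg: "\<And>s t. t \<in> snd X s \<Longrightarrow> map g t \<in> snd X s"
  shows "f \<in> automorphisms X"
  unfolding automorphisms_def struc_iso_def
proof (intro CollectI conjI ext b allI impI iffI)
  fix s t assume "set t \<subseteq> fst X" "map f t \<in> snd X s"
  then show "t \<in> snd X s" using pg[of "map f t" s] map_idem_on[of t "fst X" g f] gf by simp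
qed (rule pf)

lemma automorphisms_Bij: "automorphisms M \<subseteq> Bij (fst M)"
  by (auto simp: automorphisms_def struc_iso_def Bij_def)

lemma aut_subgroup: "subgroup (automorphisms M) (BijGroup (fst M))"
proof (rule group.subgroupI[OF group_BijGroup])
  let ?S = "fst M"
  show "automorphisms M \<subseteq> carrier (BijGroup ?S)" using automorphisms_Bij by (simp add: BijGroup_def)
  show "automorphisms M \<noteq> {}"
  proof -
    have "(\<lambda>x\<in>?S. x) \<in> automorphisms M"
      unfolding automorphisms_def struc_iso_def
      by (auto simp: bij_betw_def inj_on_def map_idI subset_iff)
    then show ?thesis by blast
  qed
  show "inv\<^bsub>BijGroup ?S\<^esub> a \<in> automorphisms M" if a: "a \<in> automorphisms M" for a
  proof -
    have aB: "a \<in> Bij ?S" using a automorphisms_Bij by blast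
    have ab: "bij_betw a ?S ?S" and iso: "\<And>s t. set t \<subseteq> ?S \<Longrightarrow> t \<in> snd M s \<longleftrightarrow> map a t \<in> snd M s"
      using a by (auto simp: automorphisms_def struc_iso_def)
    let ?i = "\<lambda>x\<in>?S. inv_into ?S a x"
    have ib: "bij_betw ?i ?S ?S"
      using restrict_inv_into_Bij[OF aB] by (simp add: Bij_def)
    have "?i \<in> automorphisms M"
      unfolding automorphisms_def struc_iso_def
    proof (intro CollectI conjI ib allI impI)
      show "?i \<in> extensional ?S" by simp
      fix s t assume st: "set t \<subseteq> ?S"
      have st': "set (map ?i t) \<subseteq> ?S" using st ib by (auto simp: bij_betw_def)
      have "map a (map ?i t) = t" using st ab by (induction t) (auto simp: bij_betw_inv_into_right)
      then show "t \<in> snd M s \<longleftrightarrow> map ?i t \<in> snd M s" using iso[OF st'] by simp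
    qed
    then show ?thesis using inv_BijGroup[OF aB] by simp
  qed
  show "a \<otimes>\<^bsub>BijGroup ?S\<^esub> b \<in> automorphisms M" if "a \<in> automorphisms M" "b \<in> automorphisms M" for a b
  proof -
    have B: "a \<in> Bij ?S" "b \<in> Bij ?S" using that automorphisms_Bij[of M] by auto
    have ab: "bij_betw a ?S ?S" "bij_betw b ?S ?S"
      and iso: "\<And>s t. set t \<subseteq> ?S \<Longrightarrow> t \<in> snd M s \<longleftrightarrow> map a t \<in> snd M s"
               "\<And>s t. set t \<subseteq> ?S \<Longrightarrow> t \<in> snd M s \<longleftrightarrow> map b t \<in> snd M s"
      using that by (auto simp: automorphisms_def struc_iso_def)
    have "compose ?S a b \<in> automorphisms M"
      unfolding automorphisms_def struc_iso_def
    proof (intro CollectI conjI allI impI)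
      show "compose ?S a b \<in> extensional ?S" by (simp add: compose_def)
      show "bij_betw (compose ?S a b) ?S ?S" using ab by (simp add: bij_betw_compose)
      fix s t assume st: "set t \<subseteq> ?S"
      have st': "set (map b t) \<subseteq> ?S" using st ab by (auto simp: bij_betw_def)
      have eq: "map (compose ?S a b) t = map a (map b t)" using st by (induction t) (auto simp: compose_def)
      show "t \<in> snd M s \<longleftrightarrow> map (compose ?S a b) t \<in> snd M s" unfolding eq using iso(2)[OF st] iso(1)[OF st'] by blast
    qed
    then show ?thesis using B by (simp add: BijGroup_def)
  qed
qed

lemma AutGroup_group: "group (AutGroup M)"
  unfolding AutGroup_def using subgroup.subgroup_is_group[OF aut_subgroup group_BijGroup] .

lemma AutGroup_mult: "a \<in> automorphisms M \<Longrightarrow> b \<in> automorphisms M \<Longrightarrow>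
    a \<otimes>\<^bsub>AutGroup M\<^esub> b = compose (fst M) a b"
proof -
  assume "a \<in> automorphisms M" "b \<in> automorphisms M"
  then have "a \<in> Bij (fst M)" "b \<in> Bij (fst M)" using automorphisms_Bij[of M] by auto
  then show ?thesis by (simp add: AutGroup_def BijGroup_def)
qed

lemma carrier_AutGroup[simp]: "carrier (AutGroup M) = automorphisms M"
  by (simp add: AutGroup_def)



lemma has_Sym_omegaI:
  fixes X :: "('s, 'a) struc" and C :: "nat \<Rightarrow> 'a set" and \<psi> :: "nat \<Rightarrow> 'a \<Rightarrow> 'a"
  assumes X: "is_struc ar X"
    and Csub: "\<And>n. C n \<subseteq> fst X" and Cne: "\<And>n. C n \<noteq> {}"
    and Cdis: "\<And>n m. n \<noteq> m \<Longrightarrow> C n \<inter> C m = {}"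
    and tup: "\<And>s t. t \<in> snd X s \<Longrightarrow> (\<exists>n. set t \<subseteq> C n) \<or> (\<forall>n. set t \<inter> C n = {})"
    and bij: "\<And>n. bij_betw (\<psi> n) (C 0) (C n)"
    and pres: "\<And>n s t. t \<in> snd X s \<Longrightarrow> set t \<subseteq> C 0 \<Longrightarrow> map (\<psi> n) t \<in> snd X s"
    and presi: "\<And>n s t. t \<in> snd X s \<Longrightarrow> set t \<subseteq> C n \<Longrightarrow> map (inv_into (C 0) (\<psi> n)) t \<in> snd X s"
  shows "has_Sym_omega X"
proof -
  define idx where "idx x = (THE n. x \<in> C n)" for x
  have idx: "idx x = n" if "x \<in> C n" for x n
    unfolding idx_def using that Cdis by (intro the_equality) auto
  define th where "th n m x = \<psi> m (inv_into (C 0) (\<psi> n) x)" for n m x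
  have inv_in: "inv_into (C 0) (\<psi> n) x \<in> C 0" if "x \<in> C n" for n x
    using bij_betw_inv_into[OF bij[of n]] that by (auto simp: bij_betw_def)
  have th_in: "th n m x \<in> C m" if "x \<in> C n" for n m x
    using inv_in[OF that] bij[of m] by (auto simp: th_def bij_betw_def)
  have th_comp: "th m k (th n m x) = th n k x" if "x \<in> C n" for n m k x
    using inv_in[OF that] bij[of m] by (simp add: th_def bij_betw_inv_into_left)
  have th_id: "th n n x = x" if "x \<in> C n" for n x
    using that bij[of n] by (simp add: th_def bij_betw_inv_into_right)
  define \<Phi> where "\<Phi> \<pi> = (\<lambda>x\<in>fst X. if \<exists>n. x \<in> C n then th (idx x) (\<pi> (idx x)) x else x)" for \<pi> :: "nat \<Rightarrow> nat"
  have Phi_C: "\<Phi> \<pi> x = th n (\<pi> n) x" if "x \<in> C n" for \<pi> x n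
    using that Csub idx[OF that] by (auto simp: \<Phi>_def)
  have Phi_out: "\<Phi> \<pi> x = x" if "x \<in> fst X" "\<forall>n. x \<notin> C n" for \<pi> x
    using that by (auto simp: \<Phi>_def)
  have Phi_X: "\<Phi> \<pi> x \<in> fst X" if "x \<in> fst X" for \<pi> x
  proof (cases "\<exists>n. x \<in> C n")
    case True
    then obtain n where n: "x \<in> C n" by blast
    have "\<Phi> \<pi> x = th n (\<pi> n) x" by (rule Phi_C[OF n])
    moreover have "th n (\<pi> n) x \<in> C (\<pi> n)" by (rule th_in[OF n])
    ultimately show ?thesis using Csub[of "\<pi> n"] by auto
  qed (use that Phi_out in auto)
  have Phi_comp: "\<Phi> \<sigma> (\<Phi> \<pi> x) = \<Phi> (\<sigma> \<circ> \<pi>) x" if "x \<in> fst X" for \<sigma> \<pi> x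
  proof (cases "\<exists>n. x \<in> C n")
    case True
    then obtain n where n: "x \<in> C n" by blast
    have a: "\<Phi> \<pi> x = th n (\<pi> n) x" by (rule Phi_C[OF n])
    have b: "th n (\<pi> n) x \<in> C (\<pi> n)" by (rule th_in[OF n])
    have c: "\<Phi> \<sigma> (th n (\<pi> n) x) = th (\<pi> n) (\<sigma> (\<pi> n)) (th n (\<pi> n) x)" by (rule Phi_C[OF b])
    have d: "\<Phi> (\<sigma> \<circ> \<pi>) x = th n ((\<sigma> \<circ> \<pi>) n) x" by (rule Phi_C[OF n])
    show ?thesis unfolding a c d using th_comp[OF n] by simp
  next
    case False
    then show ?thesis using Phi_out that by simp
  qed
  have Phi_id: "\<Phi> id x = x" if "x \<in> fst X" for x
  proof (cases "\<exists>n. x \<in> C n")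
    case True
    then obtain n where n: "x \<in> C n" by blast
    have "\<Phi> id x = th n (id n) x" by (rule Phi_C[OF n])
    then show ?thesis using th_id[OF n] by simp
  qed (use that Phi_out in auto)
  have Phi_pres: "map (\<Phi> \<pi>) t \<in> snd X s" if t: "t \<in> snd X s" for \<pi> t s
  proof -
    have tX: "set t \<subseteq> fst X" using X t by (auto simp: is_struc_def)
    from tup[OF t] show ?thesis
    proof
      assume "\<exists>n. set t \<subseteq> C n"
      then obtain n where n: "set t \<subseteq> C n" by blast
      have "map (\<Phi> \<pi>) t = map (th n (\<pi> n)) t"
      proof (rule map_cong)
        fix y assume "y \<in> set t"
        then have "y \<in> C n" using n by blast
        then show "\<Phi> \<pi> y = th n (\<pi> n) y" by (rule Phi_C)
      qed simp
      also have "\<dots> = map (\<psi> (\<pi> n)) (map (inv_into (C 0) (\<psi> n)) t)" by (simp add: th_def)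
      finally have "map (\<Phi> \<pi>) t = map (\<psi> (\<pi> n)) (map (inv_into (C 0) (\<psi> n)) t)" .
      moreover have "map (inv_into (C 0) (\<psi> n)) t \<in> snd X s" using presi t n by blast
      moreover have "set (map (inv_into (C 0) (\<psi> n)) t) \<subseteq> C 0" using n inv_in by auto
      ultimately show ?thesis using pres[of "map (inv_into (C 0) (\<psi> n)) t" s "\<pi> n"] by (simp only:)
    next
      assume "\<forall>n. set t \<inter> C n = {}"
      then have "map (\<Phi> \<pi>) t = t" using tX Phi_out by (induction t) auto
      then show ?thesis using t by simp
    qed
  qed
  have Phi_aut: "\<Phi> \<pi> \<in> automorphisms X" if "bij \<pi>" for \<pi>
  proof (rule auto_intro[OF X, where g = "\<Phi> (inv_into UNIV \<pi>)"])
    show "\<Phi> \<pi> \<in> extensional (fst X)" by (simp add: \<Phi>_def)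
    have c1: "inv_into UNIV \<pi> \<circ> \<pi> = id" using that by (simp add: bij_def)
    have c2: "\<pi> \<circ> inv_into UNIV \<pi> = id" using that by (simp add: bij_def surj_iff)
    show gf: "\<And>x. x \<in> fst X \<Longrightarrow> \<Phi> (inv_into UNIV \<pi>) (\<Phi> \<pi> x) = x"
    proof -
      fix x assume "x \<in> fst X"
      then show "\<Phi> (inv_into UNIV \<pi>) (\<Phi> \<pi> x) = x" using Phi_comp[of x "inv_into UNIV \<pi>" \<pi>] Phi_id[of x] c1 by simp
    qed
    have fg: "\<And>x. x \<in> fst X \<Longrightarrow> \<Phi> \<pi> (\<Phi> (inv_into UNIV \<pi>) x) = x"
    proof -
      fix x assume "x \<in> fst X"
      then show "\<Phi> \<pi> (\<Phi> (inv_into UNIV \<pi>) x) = x" using Phi_comp[of x \<pi> "inv_into UNIV \<pi>"] Phi_id[of x] c2 by simp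
    qed
    show "bij_betw (\<Phi> \<pi>) (fst X) (fst X)"
      by (rule bij_betwI[where g = "\<Phi> (inv_into UNIV \<pi>)"]) (use Phi_X gf fg in auto)
  qed (use Phi_pres in auto)
  have carrB: "carrier (BijGroup (UNIV :: nat set)) = {\<pi>. bij \<pi>}"
    by (auto simp: BijGroup_def Bij_def)
  have hom: "\<Phi> \<in> hom (BijGroup (UNIV :: nat set)) (AutGroup X)"
    unfolding hom_def
  proof (intro CollectI conjI ballI)
    show "\<Phi> \<in> carrier (BijGroup UNIV) \<rightarrow> carrier (AutGroup X)" using Phi_aut carrB by auto
    fix x y :: "nat \<Rightarrow> nat" assume xy: "x \<in> carrier (BijGroup UNIV)" "y \<in> carrier (BijGroup UNIV)"
    have m1: "x \<otimes>\<^bsub>BijGroup UNIV\<^esub> y = x \<circ> y" using xy by (auto simp: BijGroup_def compose_def)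
    have m2: "\<Phi> x \<otimes>\<^bsub>AutGroup X\<^esub> \<Phi> y = compose (fst X) (\<Phi> x) (\<Phi> y)"
      using xy Phi_aut carrB AutGroup_mult[of "\<Phi> x" X "\<Phi> y"] by auto
    show "\<Phi> (x \<otimes>\<^bsub>BijGroup UNIV\<^esub> y) = \<Phi> x \<otimes>\<^bsub>AutGroup X\<^esub> \<Phi> y"
      unfolding m1 m2 using Phi_comp by (auto simp: compose_def \<Phi>_def[of "x \<circ> y"] fun_eq_iff)
  qed
  have inj: "inj_on \<Phi> (carrier (BijGroup (UNIV :: nat set)))"
  proof (rule inj_onI)
    fix \<pi> \<sigma> :: "nat \<Rightarrow> nat" assume eq: "\<Phi> \<pi> = \<Phi> \<sigma>"
    show "\<pi> = \<sigma>"
    proof (rule ccontr)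
      assume "\<pi> \<noteq> \<sigma>"
      then obtain n where n: "\<pi> n \<noteq> \<sigma> n" by blast
      obtain x where x: "x \<in> C n" using Cne by blast
      have "\<Phi> \<pi> x \<in> C (\<pi> n)" "\<Phi> \<sigma> x \<in> C (\<sigma> n)" using Phi_C th_in x by auto
      then show False using eq Cdis[OF n] by auto
    qed
  qed
  have gh: "group_hom (BijGroup (UNIV :: nat set)) (AutGroup X) \<Phi>"
    by (simp add: group_hom_def group_hom_axioms_def group_BijGroup AutGroup_group hom)
  define H where "H = \<Phi> ` carrier (BijGroup (UNIV :: nat set))"
  have sub: "subgroup H (AutGroup X)" unfolding H_def by (rule group_hom.img_is_subgroup[OF gh])
  have "\<Phi> \<in> iso (BijGroup (UNIV :: nat set)) ((AutGroup X)\<lparr>carrier := H\<rparr>)"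
  proof (rule isoI)
    show "\<Phi> \<in> hom (BijGroup UNIV) (AutGroup X\<lparr>carrier := H\<rparr>)"
      using hom unfolding hom_def H_def by auto
    show "bij_betw \<Phi> (carrier (BijGroup UNIV)) (carrier (AutGroup X\<lparr>carrier := H\<rparr>))"
      using inj unfolding H_def bij_betw_def by simp
  qed
  then have "BijGroup (UNIV :: nat set) \<cong> (AutGroup X)\<lparr>carrier := H\<rparr>" by (rule is_isoI)
  then have "(AutGroup X)\<lparr>carrier := H\<rparr> \<cong> BijGroup (UNIV :: nat set)"
    by (rule group.iso_sym[OF group_BijGroup])
  then show ?thesis using sub unfolding has_Sym_omega_def by blast
qed



lemma struc_Union_struc:
  assumes "\<And>D. D \<in> F \<Longrightarrow> is_struc ar D" shows "is_struc ar (struc_Union F)"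
  unfolding is_struc_def
proof (intro allI ballI)
  fix s t assume "t \<in> snd (struc_Union F) s"
  then obtain D where D: "D \<in> F" "t \<in> snd D s" by (auto simp: struc_Union_def)
  then have "length t = ar s" "set t \<subseteq> fst D" using assms[OF D(1)] by (auto simp: is_struc_def)
  then show "length t = ar s \<and> set t \<subseteq> fst (struc_Union F)" using D(1) by (auto simp: struc_Union_def)
qed

lemma with_Q_struc: "is_struc ar M \<Longrightarrow> is_struc ar (with_Q ar Q M)"
  unfolding is_struc_def with_Q_def by auto

lemma struc_un_struc: "is_struc ar A \<Longrightarrow> is_struc ar B \<Longrightarrow> is_struc ar (struc_un A B)"
  unfolding is_struc_def struc_un_def by (simp; blast)

lemma T_R_struc: "is_T_R ar R A \<Longrightarrow> is_struc ar A"
  by (simp add: is_T_R_def R_tree_def R_graph_def)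

lemma T'_R_struc: "is_T'_R ar R A \<Longrightarrow> is_struc ar A"
  by (simp add: is_T'_R_def R_tree_def R_graph_def)

lemma union_Sym:
  fixes e :: "nat \<Rightarrow> 'i"
  assumes arR: "2 \<le> ar R"
    and F: "\<And>D. D \<in> F \<Longrightarrow> is_struc ar D"
    and eF: "\<And>n. T (e n) \<in> F" and eT: "\<And>n. is_T_R ar R (T (e n))"
    and sep: "\<And>D n. D \<in> F \<Longrightarrow> D = T (e n) \<or> fst D \<inter> fst (T (e n)) = {}"
    and dis: "\<And>n m. n \<noteq> m \<Longrightarrow> fst (T (e n)) \<inter> fst (T (e m)) = {}"
  shows "has_Sym_omega (struc_Union F)"
proof -
  define \<psi> where "\<psi> n = (SOME f. struc_iso (T (e 0)) (T (e n)) f)" for n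
  have iso: "struc_iso (T (e 0)) (T (e n)) (\<psi> n)" for n
  proof -
    have ex: "\<exists>f. struc_iso (T (e 0)) (T (e n)) f" by (rule T_R_iso[OF eT eT arR])
    from someI_ex[OF ex] show ?thesis unfolding \<psi>_def .
  qed
  have snd_X: "t \<in> snd (struc_Union F) s \<longleftrightarrow> (\<exists>D\<in>F. t \<in> snd D s)" for t s
    by (simp add: struc_Union_def)
  have tD: "set t \<subseteq> fst D" if "D \<in> F" "t \<in> snd D s" for D t s
    using F[OF that(1)] that(2) by (auto simp: is_struc_def)
  have which: "D = T (e n)" if W: "D \<in> F" "t \<in> snd D s" "t \<noteq> []" "set t \<subseteq> fst (T (e n))" for D t s n
  proof -
    obtain x where "x \<in> set t" using W(3) by (cases t) auto
    then have "x \<in> fst D \<inter> fst (T (e n))" using tD[OF W(1,2)] W(4) by auto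
    then show ?thesis using sep[OF W(1), of n] by blast
  qed
  show ?thesis
  proof (rule has_Sym_omegaI[where C = "\<lambda>n. fst (T (e n))" and \<psi> = \<psi>])
    show "is_struc ar (struc_Union F)" using struc_Union_struc F by blast
    show "\<And>n. fst (T (e n)) \<subseteq> fst (struc_Union F)"
    proof -
      fix n show "fst (T (e n)) \<subseteq> fst (struc_Union F)" using eF[of n] by (auto simp: struc_Union_def)
    qed
    show "\<And>n. fst (T (e n)) \<noteq> {}"
    proof -
      fix n have "infinite (fst (T (e n)))" using eT[of n] by (simp add: is_T_R_def)
      then show "fst (T (e n)) \<noteq> {}" by (metis finite.emptyI)
    qed
    show "\<And>n m. n \<noteq> m \<Longrightarrow> fst (T (e n)) \<inter> fst (T (e m)) = {}" by (rule dis)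
    show "\<And>n. bij_betw (\<psi> n) (fst (T (e 0))) (fst (T (e n)))" using iso by (simp add: struc_iso_def)
    show "(\<exists>n. set t \<subseteq> fst (T (e n))) \<or> (\<forall>n. set t \<inter> fst (T (e n)) = {})"
      if "t \<in> snd (struc_Union F) s" for s t
    proof -
      have "\<exists>D\<in>F. t \<in> snd D s" using that(1) by (simp add: struc_Union_def)
      then obtain D where D: "D \<in> F" "t \<in> snd D s" by blast
      show ?thesis
      proof (cases "\<exists>n. D = T (e n)")
        case True
        then obtain n where "D = T (e n)" by blast
        then have "set t \<subseteq> fst (T (e n))" using tD[OF D] by (simp only:)
        then show ?thesis by blast
      next
        case False
        show ?thesis
        proof (intro disjI2 allI)
          fix n
          have "fst D \<inter> fst (T (e n)) = {}" using sep[OF D(1), of n] False by blast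
          then show "set t \<inter> fst (T (e n)) = {}" using tD[OF D] by blast
        qed
      qed
    qed
    show "map (\<psi> n) t \<in> snd (struc_Union F) s"
      if "t \<in> snd (struc_Union F) s" "set t \<subseteq> fst (T (e 0))" for n s t
    proof (cases "t = []")
      case True then show ?thesis using that by simp
    next
      case False
      have "\<exists>D\<in>F. t \<in> snd D s" using that(1) by (simp add: struc_Union_def)
      then obtain D where D: "D \<in> F" "t \<in> snd D s" by blast
      have "D = T (e 0)" using which[OF D False that(2)] .
      then have "map (\<psi> n) t \<in> snd (T (e n)) s" using iso[of n] D that(2) by (simp add: struc_iso_def)
      then show ?thesis using eF[of n] by (auto simp: struc_Union_def)
    qed
    show "map (inv_into (fst (T (e 0))) (\<psi> n)) t \<in> snd (struc_Union F) s"
      if "t \<in> snd (struc_Union F) s" "set t \<subseteq> fst (T (e n))" for n s t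
    proof (cases "t = []")
      case True then show ?thesis using that by simp
    next
      case False
      have "\<exists>D\<in>F. t \<in> snd D s" using that(1) by (simp add: struc_Union_def)
      then obtain D where D: "D \<in> F" "t \<in> snd D s" by blast
      have "D = T (e n)" using which[OF D False that(2)] .
      let ?u = "map (inv_into (fst (T (e 0))) (\<psi> n)) t"
      have b: "bij_betw (\<psi> n) (fst (T (e 0))) (fst (T (e n)))" using iso by (simp add: struc_iso_def)
      have u0: "set ?u \<subseteq> fst (T (e 0))"
        using that(2) bij_betw_inv_into[OF b] by (auto simp: bij_betw_def)
      have "map (\<psi> n) ?u = t" using that(2) b by (induction t) (auto simp: bij_betw_inv_into_right)
      then have "?u \<in> snd (T (e 0)) s" using iso[of n] u0 D \<open>D = T (e n)\<close> by (simp add: struc_iso_def)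
      then show ?thesis using eF[of 0] by (auto simp: struc_Union_def)
    qed
  qed
qed

lemma aut_restrict:
  assumes f: "f \<in> automorphisms U" and b: "bij_betw f (fst B) (fst B)" and sub: "fst B \<subseteq> fst U"
    and eq: "\<And>s t. set t \<subseteq> fst B \<Longrightarrow> t \<in> snd U s \<longleftrightarrow> t \<in> snd B s"
  shows "restrict f (fst B) \<in> automorphisms B"
  unfolding automorphisms_def struc_iso_def
proof (intro CollectI conjI allI impI)
  show "restrict f (fst B) \<in> extensional (fst B)" by simp
  have "bij_betw (restrict f (fst B)) (fst B) (fst B) = bij_betw f (fst B) (fst B)"
    by (rule bij_betw_cong) simp
  then show "bij_betw (restrict f (fst B)) (fst B) (fst B)" using b by simp
  fix s t assume st: "set t \<subseteq> fst B"
  have m: "map (restrict f (fst B)) t = map f t" using st by (induction t) auto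
  have fB: "f ` fst B = fst B" using b by (simp add: bij_betw_def)
  have st': "set (map f t) \<subseteq> fst B" using st fB by auto
  have iso: "\<forall>s t. set t \<subseteq> fst U \<longrightarrow> (t \<in> snd U s \<longleftrightarrow> map f t \<in> snd U s)"
    using f by (simp add: automorphisms_def struc_iso_def)
  have stU: "set t \<subseteq> fst U" using st sub by blast
  have "t \<in> snd U s \<longleftrightarrow> map f t \<in> snd U s" using iso stU by blast
  then show "t \<in> snd B s \<longleftrightarrow> map (restrict f (fst B)) t \<in> snd B s"
    unfolding m using eq[OF st, of s] eq[OF st', of s] by (simp only:)
qed



lemma Q_tuple:
  assumes b: "bij_betw f S S" and st: "set t \<subseteq> S" and q: "0 < q"
  shows "t \<in> {replicate q a | a. a \<in> S} \<longleftrightarrow> map f t \<in> {replicate q a | a. a \<in> S}"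
proof
  assume "t \<in> {replicate q a | a. a \<in> S}"
  then obtain a where "t = replicate q a" "a \<in> S" by blast
  moreover have "f a \<in> S" using b \<open>a \<in> S\<close> by (metis bij_betwE)
  ultimately show "map f t \<in> {replicate q a | a. a \<in> S}" by auto
next
  assume "map f t \<in> {replicate q a | a. a \<in> S}"
  then obtain c where c: "map f t = replicate q c" "c \<in> S" by blast
  have lt: "length t = q" using c(1) by (metis length_map length_replicate)
  then have ne: "t \<noteq> []" using q by auto
  define a where "a = hd t"
  have aS: "a \<in> S" using ne st a_def by auto
  have inj: "inj_on f S" using b by (simp add: bij_betw_def)
  have fx: "f x = c" if "x \<in> set t" for x
  proof -
    have "f x \<in> set (map f t)" using that by simp
    then show ?thesis using c(1) by (metis in_set_replicate)
  qed
  have "\<forall>x\<in>set t. x = a"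
  proof
    fix x assume x: "x \<in> set t"
    have "f x = f a" using fx x fx[of a] ne a_def by simp
    then show "x = a" using inj x st aS by (meson inj_onD subsetD)
  qed
  then have "t = replicate q a" using lt by (metis replicate_length_same)
  then show "t \<in> {replicate q a | a. a \<in> S}" using aS by blast
qed

lemma with_Q_AutGroup:
  assumes q: "0 < ar Q" and MQ: "snd M Q = {}"
  shows "AutGroup (with_Q ar Q M) = AutGroup M"
proof -
  have fst_eq: "fst (with_Q ar Q M) = fst M" by (simp add: with_Q_def)
  have "struc_iso (with_Q ar Q M) (with_Q ar Q M) f \<longleftrightarrow> struc_iso M M f" for f
  proof (cases "bij_betw f (fst M) (fst M)")
    case True
    have "(t \<in> snd (with_Q ar Q M) s \<longleftrightarrow> map f t \<in> snd (with_Q ar Q M) s) \<longleftrightarrow>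
          (t \<in> snd M s \<longleftrightarrow> map f t \<in> snd M s)" if "set t \<subseteq> fst M" for s t
    proof (cases "s = Q")
      case True
      have "t \<in> snd (with_Q ar Q M) s \<longleftrightarrow> map f t \<in> snd (with_Q ar Q M) s"
        using Q_tuple[OF \<open>bij_betw f (fst M) (fst M)\<close> that q] True by (simp add: with_Q_def)
      moreover have "t \<in> snd M s \<longleftrightarrow> map f t \<in> snd M s" using True MQ by simp
      ultimately show ?thesis by blast
    next
      case False
      then show ?thesis by (simp add: with_Q_def)
    qed
    then show ?thesis unfolding struc_iso_def fst_eq by blast
  next
    case False
    then show ?thesis unfolding struc_iso_def fst_eq by blast
  qed
  then have "automorphisms (with_Q ar Q M) = automorphisms M"
    unfolding automorphisms_def fst_eq by blast
  then show ?thesis unfolding AutGroup_def fst_eq by simp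
qed

lemma aut_iso_facts:
  assumes "g \<in> automorphisms A"
  shows "bij_betw g (fst A) (fst A)" "g \<in> extensional (fst A)"
    "\<And>s t. set t \<subseteq> fst A \<Longrightarrow> t \<in> snd A s \<longleftrightarrow> map g t \<in> snd A s"
  using assms by (auto simp: automorphisms_def struc_iso_def)

lemma aut_inv_mem:
  assumes "g \<in> automorphisms A"
  shows "restrict (inv_into (fst A) g) (fst A) \<in> automorphisms A"
proof -
  have "g \<in> Bij (fst A)" using assms automorphisms_Bij[of A] by blast
  then have "inv\<^bsub>BijGroup (fst A)\<^esub> g = restrict (inv_into (fst A) g) (fst A)" by (rule inv_BijGroup)
  moreover have "inv\<^bsub>BijGroup (fst A)\<^esub> g \<in> automorphisms A"
    using subgroup.m_inv_closed[OF aut_subgroup assms] .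
  ultimately show ?thesis by simp
qed

lemma aut_union_rigid:
  fixes A N :: "('s, 'a) struc"
  assumes arp: "\<forall>s. 0 < ar s" and A: "is_struc ar A" and N: "is_struc ar N"
    and dis: "fst A \<inter> fst N = {}" and rig: "rigid N"
    and loopA: "\<forall>a\<in>fst A. replicate (ar Q) a \<in> snd A Q" and NQ: "snd N Q = {}"
  shows "AutGroup (struc_un A N) \<cong> AutGroup A"
proof -
  define U where "U = struc_un A N"
  have fU: "fst U = fst A \<union> fst N" and sU: "\<And>s. snd U s = snd A s \<union> snd N s"
    by (simp_all add: U_def struc_un_def)
  have neA: "t \<noteq> []" if "t \<in> snd A s" for t s
  proof
    assume "t = []"
    have "length t = ar s" using A that unfolding is_struc_def by blast
    then show False using \<open>t = []\<close> arp by (metis less_numeral_extra(3) list.size(3))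
  qed
  have neN: "t \<noteq> []" if "t \<in> snd N s" for t s
  proof
    assume "t = []"
    have "length t = ar s" using N that unfolding is_struc_def by blast
    then show False using \<open>t = []\<close> arp by (metis less_numeral_extra(3) list.size(3))
  qed
  have tA: "set t \<subseteq> fst A" if "t \<in> snd A s" for t s
    using A that by (auto simp: is_struc_def)
  have tN: "set t \<subseteq> fst N" if "t \<in> snd N s" for t s
    using N that by (auto simp: is_struc_def)
  define ext where "ext g = (\<lambda>x\<in>fst U. if x \<in> fst A then g x else x)" for g :: "'a \<Rightarrow> 'a"
  have extA: "ext g x = g x" if "x \<in> fst A" for g x using that fU by (simp add: ext_def)
  have extN: "ext g x = x" if "x \<in> fst N" for g x using that fU dis by (auto simp: ext_def)
  have ext_pres: "map (ext g) t \<in> snd U s" if g: "g \<in> automorphisms A" and t: "t \<in> snd U s" for g t s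
  proof -
    from t consider "t \<in> snd A s" | "t \<in> snd N s" using sU by blast
    then show ?thesis
    proof cases
      case 1
      have m: "map (ext g) t = map g t" using tA[OF 1] extA by (induction t) auto
      show ?thesis unfolding m sU using aut_iso_facts(3)[OF g tA[OF 1]] 1 by blast
    next
      case 2
      have m: "map (ext g) t = t" using tN[OF 2] extN by (induction t) auto
      show ?thesis unfolding m using t .
    qed
  qed
  have gA: "g x \<in> fst A" if "g \<in> automorphisms A" "x \<in> fst A" for g x
    using aut_iso_facts(1)[OF that(1)] that(2) by (metis bij_betwE)
  have ext_U: "ext g x \<in> fst U" if "g \<in> automorphisms A" "x \<in> fst U" for g x
  proof (cases "x \<in> fst A")
    case True then show ?thesis using extA gA that fU by auto
  next
    case False then show ?thesis using extN that fU by auto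
  qed
  have ext_comp: "ext g (ext h x) = ext (compose (fst A) g h) x"
    if "g \<in> automorphisms A" "h \<in> automorphisms A" "x \<in> fst U" for g h x
  proof (cases "x \<in> fst A")
    case True
    then show ?thesis using extA gA[OF that(2) True] by (simp add: compose_def)
  next
    case False
    then have "x \<in> fst N" using that fU by auto
    then show ?thesis using extN by simp
  qed
  have ext_aut: "ext g \<in> automorphisms U" if g: "g \<in> automorphisms A" for g
  proof -
    define gi where "gi = restrict (inv_into (fst A) g) (fst A)"
    have gi: "gi \<in> automorphisms A" unfolding gi_def by (rule aut_inv_mem[OF g])
    have bg: "bij_betw g (fst A) (fst A)" by (rule aut_iso_facts(1)[OF g])
    have c1: "gi (g x) = x" if "x \<in> fst A" for x
      using that bg gA[OF g that] by (simp add: gi_def bij_betw_inv_into_left)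
    have c2: "g (gi x) = x" if "x \<in> fst A" for x
      using that bg by (simp add: gi_def bij_betw_inv_into_right)
    have e1: "ext gi (ext g x) = x" if "x \<in> fst U" for x
    proof (cases "x \<in> fst A")
      case True then show ?thesis using extA gA[OF g True] c1 by simp
    next
      case False then have "x \<in> fst N" using that fU by auto
      then show ?thesis using extN by simp
    qed
    have e2: "ext g (ext gi x) = x" if "x \<in> fst U" for x
    proof (cases "x \<in> fst A")
      case True then show ?thesis using extA gA[OF gi True] c2 by simp
    next
      case False then have "x \<in> fst N" using that fU by auto
      then show ?thesis using extN by simp
    qed
    have sUs: "is_struc ar U" unfolding U_def by (rule struc_un_struc[OF A N])
    show ?thesis
    proof (rule auto_intro[OF sUs, where g = "ext gi"])
      show "ext g \<in> extensional (fst U)" by (simp add: ext_def)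
      show "bij_betw (ext g) (fst U) (fst U)"
        by (rule bij_betwI[where g = "ext gi"]) (use ext_U[OF g] ext_U[OF gi] e1 e2 in auto)
      show "\<And>x. x \<in> fst U \<Longrightarrow> ext gi (ext g x) = x" by (rule e1)
      show "\<And>s t. t \<in> snd U s \<Longrightarrow> map (ext g) t \<in> snd U s" using ext_pres[OF g] .
      show "\<And>s t. t \<in> snd U s \<Longrightarrow> map (ext gi) t \<in> snd U s" using ext_pres[OF gi] .
    qed
  qed
  have hom: "ext \<in> hom (AutGroup A) (AutGroup U)"
    unfolding hom_def
  proof (intro CollectI conjI ballI)
    show "ext \<in> carrier (AutGroup A) \<rightarrow> carrier (AutGroup U)" using ext_aut by auto
    fix g h assume gh: "g \<in> carrier (AutGroup A)" "h \<in> carrier (AutGroup A)"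
    then have gh': "g \<in> automorphisms A" "h \<in> automorphisms A" by auto
    have m1: "g \<otimes>\<^bsub>AutGroup A\<^esub> h = compose (fst A) g h" using AutGroup_mult[OF gh'] .
    have m2: "ext g \<otimes>\<^bsub>AutGroup U\<^esub> ext h = compose (fst U) (ext g) (ext h)"
      using AutGroup_mult[OF ext_aut[OF gh'(1)] ext_aut[OF gh'(2)]] .
    show "ext (g \<otimes>\<^bsub>AutGroup A\<^esub> h) = ext g \<otimes>\<^bsub>AutGroup U\<^esub> ext h"
      unfolding m1 m2
    proof (rule ext)
      fix x show "ext (compose (fst A) g h) x = compose (fst U) (ext g) (ext h) x"
      proof (cases "x \<in> fst U")
        case True then show ?thesis using ext_comp[OF gh' True] by (simp add: compose_def)
      next
        case False then show ?thesis by (simp add: compose_def ext_def)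
      qed
    qed
  qed
  have inj: "inj_on ext (automorphisms A)"
  proof (rule inj_onI)
    fix g h assume g: "g \<in> automorphisms A" and h: "h \<in> automorphisms A" and eq: "ext g = ext h"
    show "g = h"
    proof (rule extensionalityI[OF aut_iso_facts(2)[OF g] aut_iso_facts(2)[OF h]])
      fix x assume "x \<in> fst A"
      then show "g x = h x" using eq extA by metis
    qed
  qed
  have surj: "f \<in> ext ` automorphisms A" if f: "f \<in> automorphisms U" for f
  proof -
    have bf: "bij_betw f (fst U) (fst U)" and ef: "f \<in> extensional (fst U)"
      and isof: "\<And>s t. set t \<subseteq> fst U \<Longrightarrow> t \<in> snd U s \<longleftrightarrow> map f t \<in> snd U s"
      using aut_iso_facts[OF f] by auto
    have fUU: "f x \<in> fst U" if "x \<in> fst U" for x using bf that by (metis bij_betwE)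
    have qp: "0 < ar Q" using arp by blast
    have repA: "x \<in> fst A" if "replicate (ar Q) x \<in> snd U Q" for x
    proof -
      have "replicate (ar Q) x \<in> snd A Q" using that sU NQ by auto
      then have "set (replicate (ar Q) x) \<subseteq> fst A" by (rule tA)
      then show ?thesis using qp by simp
    qed
    have fA: "f a \<in> fst A" if a: "a \<in> fst A" for a
    proof -
      have "replicate (ar Q) a \<in> snd U Q" using loopA a sU by auto
      moreover have "set (replicate (ar Q) a) \<subseteq> fst U" using a fU by auto
      ultimately have "map f (replicate (ar Q) a) \<in> snd U Q" using isof by blast
      then show ?thesis using repA by simp
    qed
    have fN: "f b \<in> fst N" if b: "b \<in> fst N" for b
    proof (rule ccontr)
      assume "f b \<notin> fst N"
      then have fbA: "f b \<in> fst A" using fUU b fU by auto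
      have "map f (replicate (ar Q) b) \<in> snd U Q" using loopA fbA sU by auto
      moreover have "set (replicate (ar Q) b) \<subseteq> fst U" using b fU by auto
      ultimately have "replicate (ar Q) b \<in> snd U Q" using isof by blast
      then have "b \<in> fst A" by (rule repA)
      then show False using b dis by auto
    qed
    have injf: "inj_on f (fst U)" using bf by (simp add: bij_betw_def)
    have imf: "f ` fst U = fst U" using bf by (simp add: bij_betw_def)
    have bA: "bij_betw f (fst A) (fst A)"
      unfolding bij_betw_def
    proof
      show "inj_on f (fst A)" using injf fU by (auto intro: inj_on_subset)
      show "f ` fst A = fst A"
      proof
        show "f ` fst A \<subseteq> fst A" using fA by auto
        show "fst A \<subseteq> f ` fst A"
        proof
          fix y assume y: "y \<in> fst A"
          then have "y \<in> f ` fst U" using imf fU by auto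
          then obtain x where x: "x \<in> fst U" "y = f x" by blast
          have "x \<notin> fst N" using fN x y dis by auto
          then show "y \<in> f ` fst A" using x fU by auto
        qed
      qed
    qed
    have bN: "bij_betw f (fst N) (fst N)"
      unfolding bij_betw_def
    proof
      show "inj_on f (fst N)" using injf fU by (auto intro: inj_on_subset)
      show "f ` fst N = fst N"
      proof
        show "f ` fst N \<subseteq> fst N" using fN by auto
        show "fst N \<subseteq> f ` fst N"
        proof
          fix y assume y: "y \<in> fst N"
          then have "y \<in> f ` fst U" using imf fU by auto
          then obtain x where x: "x \<in> fst U" "y = f x" by blast
          have "x \<notin> fst A" using fA x y dis by auto
          then show "y \<in> f ` fst N" using x fU by auto
        qed
      qed
    qed
    have eqA: "t \<in> snd U s \<longleftrightarrow> t \<in> snd A s" if st: "set t \<subseteq> fst A" for s t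
    proof
      assume "t \<in> snd U s"
      then consider "t \<in> snd A s" | "t \<in> snd N s" using sU by blast
      then show "t \<in> snd A s"
      proof cases
        case 2
        obtain x where "x \<in> set t" using neN[OF 2] by (cases t) auto
        then show ?thesis using st tN[OF 2] dis by auto
      qed
    qed (use sU in auto)
    have eqN: "t \<in> snd U s \<longleftrightarrow> t \<in> snd N s" if st: "set t \<subseteq> fst N" for s t
    proof
      assume "t \<in> snd U s"
      then consider "t \<in> snd A s" | "t \<in> snd N s" using sU by blast
      then show "t \<in> snd N s"
      proof cases
        case 1
        obtain x where "x \<in> set t" using neA[OF 1] by (cases t) auto
        then show ?thesis using st tA[OF 1] dis by auto
      qed
    qed (use sU in auto)
    have rA: "restrict f (fst A) \<in> automorphisms A"
      by (rule aut_restrict[OF f bA]) (use fU eqA in auto)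
    have rN: "restrict f (fst N) \<in> automorphisms N"
      by (rule aut_restrict[OF f bN]) (use fU eqN in auto)
    then have "restrict f (fst N) = (\<lambda>x\<in>fst N. x)" using rig by (simp add: rigid_def)
    then have fid: "f b = b" if "b \<in> fst N" for b using that by (metis restrict_apply')
    have "f = ext (restrict f (fst A))"
    proof (rule ext)
      fix x show "f x = ext (restrict f (fst A)) x"
      proof (cases "x \<in> fst U")
        case True
        show ?thesis
        proof (cases "x \<in> fst A")
          case True then show ?thesis using extA by simp
        next
          case False then have "x \<in> fst N" using \<open>x \<in> fst U\<close> fU by auto
          then show ?thesis using extN fid by simp
        qed
      next
        case False then show ?thesis using ef by (simp add: ext_def extensional_def)
      qed
    qed
    then show ?thesis using rA by blast
  qed
  have "ext \<in> iso (AutGroup A) (AutGroup U)"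
  proof (rule isoI[OF hom])
    show "bij_betw ext (carrier (AutGroup A)) (carrier (AutGroup U))"
      unfolding bij_betw_def using inj ext_aut surj by auto
  qed
  then have "AutGroup A \<cong> AutGroup U" by (rule is_isoI)
  then show ?thesis unfolding U_def by (rule group.iso_sym[OF AutGroup_group])
qed



theorem lemma3p1:
  fixes ar :: "'s::countable \<Rightarrow> nat"
    and R :: 's
    and P :: "('s, 'a) struc set"
  assumes arity_pos: "\<forall>s. 0 < ar s"
    and R_ar: "2 \<le> ar R"
    and P_prop: "is_property ar P"
    and aut_inv: "\<forall>M N. is_struc ar M \<longrightarrow> is_struc ar N \<longrightarrow> AutGroup M \<cong> AutGroup N \<longrightarrow>
                     (M \<in> P \<longleftrightarrow> N \<in> P)"
  shows
    "((\<forall>M. is_struc ar M \<longrightarrow> has_Sym_omega M \<longrightarrow> M \<notin> P) \<longrightarrow>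
       (\<forall>(I :: 'i set) (J :: 'j set) T T'.
          infinite I \<longrightarrow> (\<forall>i\<in>I. is_T_R ar R (T i)) \<longrightarrow> (\<forall>j\<in>J. is_T'_R ar R (T' j)) \<longrightarrow>
          (\<forall>i\<in>I. \<forall>i'\<in>I. i \<noteq> i' \<longrightarrow> fst (T i) \<inter> fst (T i') = {}) \<longrightarrow>
          (\<forall>j\<in>J. \<forall>j'\<in>J. j \<noteq> j' \<longrightarrow> fst (T' j) \<inter> fst (T' j') = {}) \<longrightarrow>
          (\<forall>i\<in>I. \<forall>j\<in>J. fst (T i) \<inter> fst (T' j) = {}) \<longrightarrow>
          struc_Union (T ` I \<union> T' ` J) \<notin> P \<and>
          (\<forall>M' Q. is_struc ar M' \<longrightarrow> Q \<noteq> R \<longrightarrow> snd M' Q = {} \<longrightarrow>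
             (\<forall>i\<in>I. fst M' \<inter> fst (T i) = {}) \<longrightarrow> (\<forall>j\<in>J. fst M' \<inter> fst (T' j) = {}) \<longrightarrow>
             struc_Union ({with_Q ar Q M'} \<union> T ` I \<union> T' ` J) \<notin> P)))
     \<and>
     ((\<forall>M. is_struc ar M \<longrightarrow> rigid M \<longrightarrow> M \<in> P) \<longrightarrow>
       (\<forall>N. is_struc ar N \<longrightarrow> finite (fst N) \<longrightarrow> rigid N \<longrightarrow> connected_struc N \<longrightarrow>
            fst N \<noteq> {} \<longrightarrow> N \<in> P))
     \<and>
     (\<forall>Q M. Q \<noteq> R \<longrightarrow> M \<in> P \<longrightarrow> snd M Q = {} \<longrightarrow>
       (\<forall>N. is_struc ar N \<longrightarrow> finite (fst N) \<longrightarrow> rigid N \<longrightarrow> connected_struc N \<longrightarrow>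
            fst N \<noteq> {} \<longrightarrow> snd N Q = {} \<longrightarrow> fst M \<inter> fst N = {} \<longrightarrow>
            struc_un (with_Q ar Q M) N \<in> P))"
proof -
  have struc_P: "\<And>M. M \<in> P \<Longrightarrow> is_struc ar M" using P_prop by (auto simp: is_property_def)
  have A: "(\<forall>M. is_struc ar M \<longrightarrow> has_Sym_omega M \<longrightarrow> M \<notin> P) \<longrightarrow>
       (\<forall>(I :: 'i set) (J :: 'j set) T T'.
          infinite I \<longrightarrow> (\<forall>i\<in>I. is_T_R ar R (T i)) \<longrightarrow> (\<forall>j\<in>J. is_T'_R ar R (T' j)) \<longrightarrow>
          (\<forall>i\<in>I. \<forall>i'\<in>I. i \<noteq> i' \<longrightarrow> fst (T i) \<inter> fst (T i') = {}) \<longrightarrow>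
          (\<forall>j\<in>J. \<forall>j'\<in>J. j \<noteq> j' \<longrightarrow> fst (T' j) \<inter> fst (T' j') = {}) \<longrightarrow>
          (\<forall>i\<in>I. \<forall>j\<in>J. fst (T i) \<inter> fst (T' j) = {}) \<longrightarrow>
          struc_Union (T ` I \<union> T' ` J) \<notin> P \<and>
          (\<forall>M' Q. is_struc ar M' \<longrightarrow> Q \<noteq> R \<longrightarrow> snd M' Q = {} \<longrightarrow>
             (\<forall>i\<in>I. fst M' \<inter> fst (T i) = {}) \<longrightarrow> (\<forall>j\<in>J. fst M' \<inter> fst (T' j) = {}) \<longrightarrow>
             struc_Union ({with_Q ar Q M'} \<union> T ` I \<union> T' ` J) \<notin> P))"
  proof (intro impI allI)
    fix I :: "'i set" and J :: "'j set" and T :: "'i \<Rightarrow> ('s, 'a) struc" and T' :: "'j \<Rightarrow> ('s, 'a) struc"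
    assume H1: "\<forall>M. is_struc ar M \<longrightarrow> has_Sym_omega M \<longrightarrow> M \<notin> P"
      and inf: "infinite I" and TI: "\<forall>i\<in>I. is_T_R ar R (T i)" and TJ: "\<forall>j\<in>J. is_T'_R ar R (T' j)"
      and dI: "\<forall>i\<in>I. \<forall>i'\<in>I. i \<noteq> i' \<longrightarrow> fst (T i) \<inter> fst (T i') = {}"
      and dJ: "\<forall>j\<in>J. \<forall>j'\<in>J. j \<noteq> j' \<longrightarrow> fst (T' j) \<inter> fst (T' j') = {}"
      and dIJ: "\<forall>i\<in>I. \<forall>j\<in>J. fst (T i) \<inter> fst (T' j) = {}"
    obtain e :: "nat \<Rightarrow> 'i" where e: "inj e" "range e \<subseteq> I" using infinite_countable_subset[OF inf] by blast
    have eI: "e n \<in> I" for n using e by auto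
    have eT: "is_T_R ar R (T (e n))" for n using TI eI by blast
    have dis: "fst (T (e n)) \<inter> fst (T (e m)) = {}" if "n \<noteq> m" for n m
    proof -
      have "e n \<noteq> e m" using e(1) that by (simp add: inj_eq)
      then show ?thesis using dI eI[of n] eI[of m] by blast
    qed
    have sepI: "D = T (e n) \<or> fst D \<inter> fst (T (e n)) = {}" if "D \<in> T ` I \<union> T' ` J" for D n
    proof -
      from that consider i where "i \<in> I" "D = T i" | j where "j \<in> J" "D = T' j" by (elim UnE imageE) blast+
      then show ?thesis
      proof cases
        case 1
        show ?thesis
        proof (cases "i = e n")
          case True then show ?thesis using 1 by simp
        next
          case False
          have "fst (T i) \<inter> fst (T (e n)) = {}" using dI 1(1) eI[of n] False by blast
          then show ?thesis using 1(2) by simp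
        qed
      next
        case 2
        have "fst (T (e n)) \<inter> fst (T' j) = {}" using dIJ 2(1) eI[of n] by blast
        then show ?thesis using 2(2) by (simp add: Int_commute)
      qed
    qed
    have strucF: "is_struc ar D" if "D \<in> T ` I \<union> T' ` J" for D
    proof -
      from that consider i where "i \<in> I" "D = T i" | j where "j \<in> J" "D = T' j" by (elim UnE imageE) blast+
      then show ?thesis
      proof cases
        case 1 then show ?thesis using T_R_struc[of ar R "T i"] TI by simp
      next
        case 2 then show ?thesis using T'_R_struc[of ar R "T' j"] TJ by simp
      qed
    qed
    have X1: "has_Sym_omega (struc_Union (T ` I \<union> T' ` J))"
      by (rule union_Sym[where F="T ` I \<union> T' ` J" and T=T and e=e and ar=ar and R=R, OF R_ar strucF _ eT sepI dis]) (use eI in auto)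
    have "is_struc ar (struc_Union (T ` I \<union> T' ` J))" by (intro struc_Union_struc strucF)
    then have P1: "struc_Union (T ` I \<union> T' ` J) \<notin> P" using H1[rule_format, OF _ X1] by blast
    have P2: "\<forall>M' Q. is_struc ar M' \<longrightarrow> Q \<noteq> R \<longrightarrow> snd M' Q = {} \<longrightarrow>
             (\<forall>i\<in>I. fst M' \<inter> fst (T i) = {}) \<longrightarrow> (\<forall>j\<in>J. fst M' \<inter> fst (T' j) = {}) \<longrightarrow>
             struc_Union ({with_Q ar Q M'} \<union> T ` I \<union> T' ` J) \<notin> P"
    proof (intro allI impI)
      fix M' Q assume M': "is_struc ar M'" and QR: "Q \<noteq> R" and M'Q: "snd M' Q = {}"
        and dM1: "\<forall>i\<in>I. fst M' \<inter> fst (T i) = {}"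
        and dM2: "\<forall>j\<in>J. fst M' \<inter> fst (T' j) = {}"
      let ?F = "{with_Q ar Q M'} \<union> T ` I \<union> T' ` J"
      have strucF2: "is_struc ar D" if "D \<in> ?F" for D
      proof (cases "D = with_Q ar Q M'")
        case True then show ?thesis using with_Q_struc[OF M'] by simp
      next
        case False then have "D \<in> T ` I \<union> T' ` J" using that by simp
        then show ?thesis by (rule strucF)
      qed
      have sep2: "D = T (e n) \<or> fst D \<inter> fst (T (e n)) = {}" if "D \<in> ?F" for D n
      proof (cases "D = with_Q ar Q M'")
        case True then show ?thesis using dM1 eI[of n] by (simp add: with_Q_def)
      next
        case False then have "D \<in> T ` I \<union> T' ` J" using that by simp
        then show ?thesis by (rule sepI)
      qed
      have X2: "has_Sym_omega (struc_Union ?F)"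
        by (rule union_Sym[where F="?F" and T=T and e=e and ar=ar and R=R, OF R_ar strucF2 _ eT sep2 dis]) (use eI in auto)
      have "is_struc ar (struc_Union ?F)" by (intro struc_Union_struc strucF2)
      then show "struc_Union ?F \<notin> P" using H1[rule_format, OF _ X2] by blast
    qed
    show "struc_Union (T ` I \<union> T' ` J) \<notin> P \<and> (\<forall>M' Q. is_struc ar M' \<longrightarrow> Q \<noteq> R \<longrightarrow> snd M' Q = {} \<longrightarrow> (\<forall>i\<in>I. fst M' \<inter> fst (T i) = {}) \<longrightarrow> (\<forall>j\<in>J. fst M' \<inter> fst (T' j) = {}) \<longrightarrow> struc_Union ({with_Q ar Q M'} \<union> T ` I \<union> T' ` J) \<notin> P)"
      using P1 P2 by (rule conjI)
  qed
  have B: "(\<forall>M. is_struc ar M \<longrightarrow> rigid M \<longrightarrow> M \<in> P) \<longrightarrow>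
       (\<forall>N. is_struc ar N \<longrightarrow> finite (fst N) \<longrightarrow> rigid N \<longrightarrow> connected_struc N \<longrightarrow>
            fst N \<noteq> {} \<longrightarrow> N \<in> P)" by blast
  have C: "\<forall>Q M. Q \<noteq> R \<longrightarrow> M \<in> P \<longrightarrow> snd M Q = {} \<longrightarrow>
       (\<forall>N. is_struc ar N \<longrightarrow> finite (fst N) \<longrightarrow> rigid N \<longrightarrow> connected_struc N \<longrightarrow>
            fst N \<noteq> {} \<longrightarrow> snd N Q = {} \<longrightarrow> fst M \<inter> fst N = {} \<longrightarrow>
            struc_un (with_Q ar Q M) N \<in> P)"
  proof (intro impI allI)
    fix Q M N assume QR: "Q \<noteq> R" and MP: "M \<in> P" and MQ: "snd M Q = {}" and N: "is_struc ar N"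
      and fin: "finite (fst N)" and rig: "rigid N" and con: "connected_struc N" and nN: "fst N \<noteq> {}"
      and NQ: "snd N Q = {}" and dis: "fst M \<inter> fst N = {}"
    have Ms: "is_struc ar M" using struc_P MP .
    have MQs: "is_struc ar (with_Q ar Q M)" using with_Q_struc[OF Ms] .
    have loop: "\<forall>a\<in>fst (with_Q ar Q M). replicate (ar Q) a \<in> snd (with_Q ar Q M) Q"
      by (auto simp: with_Q_def)
    have dis': "fst (with_Q ar Q M) \<inter> fst N = {}" using dis by (simp add: with_Q_def)
    have "AutGroup (struc_un (with_Q ar Q M) N) \<cong> AutGroup (with_Q ar Q M)"
      by (rule aut_union_rigid[OF arity_pos MQs N dis' rig loop NQ])
    also have "AutGroup (with_Q ar Q M) = AutGroup M"
      by (rule with_Q_AutGroup[OF _ MQ]) (use arity_pos in blast)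
    finally have iso: "AutGroup (struc_un (with_Q ar Q M) N) \<cong> AutGroup M" .
    have Us: "is_struc ar (struc_un (with_Q ar Q M) N)" using struc_un_struc[OF MQs N] .
    show "struc_un (with_Q ar Q M) N \<in> P" using aut_inv Us Ms iso MP by blast
  qed
  show ?thesis by (intro conjI A B C)
qed

end
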